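(* For $\lambda\in P^+$ and all $(\mathbf i',\mathbf i)\in\mathbf I^{r-1}\times\mathbf I^r$, $W(\lambda)^{\ge(\mathbf i',\mathbf i)}=\mathbf U(\mathfrak n^-[t])^{\ge(\mathbf i',\mathbf i)}w_\lambda$ and $W(\lambda)^{>(\mathbf i',\mathbf i)}=\mathbf U(\mathfrak n^-[t])^{>(\mathbf i',\mathbf i)}w_\lambda$.
   Context: $\mathfrak g=\mathfrak{sp}_{2r}$: complex matrices $(a_{i,j})$, indices $1,\dots,r,-r,\dots,-1$, $a_{i,j}=-\mathrm{sgn}(i)\mathrm{sgn}(j)a_{-j,-i}$; $\mathfrak h$ spanned by $E_{i,i}-E_{-i,-i}$, dual basis $\varepsilon_i$. Root vectors: $x^+_{i,j-1}=E_{i,j}-E_{-j,-i}$, $x^-_{i,j-1}=E_{j,i}-E_{-i,-j}$, $x^+_{i,\overline j}=E_{i,-j}+E_{j,-i}$, $x^-_{i,\overline j}=E_{-j,i}+E_{-i,j}$ ($1\le i<j\le r$), $x^+_{i,\overline i}=E_{i,-i}$, $x^-_{i,\overline i}=E_{-i,i}$, $x^\pm_{i,r}:=x^\pm_{i,\overline r}$; $\mathfrak n^\pm$ spanned by $x^\pm_{i,j}$ ($1\le i\le j<r$), $x^\pm_{i,\overline j}$ ($1\le i\le j\le r$). $\mathfrak n^-_{r-1}$ is spanned by $x^-_{i,j}$ ($1\le i\le j<r-1$) and $x^-_{i,\overline j}$ ($1\le i\le j\le r-1$). $\omega_i=\varepsilon_1+\dots+\varepsilon_i$, $P^+=\sum\mathbb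 N\omega_i$. $\mathfrak a[t]=\mathfrak a\otimes\mathbb C[t]$. For $\lambda=\sum m_i\omega_i$, $W(\lambda)$ is the cyclic $\mathfrak g[t]$-module generated by $w_\lambda$ with $\mathfrak n^+[t]w_\lambda=0$, $(h\otimes t^s)w_\lambda=\langle\lambda,h\rangle\delta_{s,0}w_\lambda$, $(x^-_{i,i})^{m_i+1}w_\lambda=0$. $\mathfrak g_{r-1}\cong\mathfrak{sp}_{2r-2}$ is the subalgebra of matrices whose rows and columns indexed $\pm r$ vanish. $\mathbf F$: pairs $(\ell,\mathbf s)$, $\ell\in\mathbb N$, $\mathbf s=(\mathbf s(1)\le\dots\le\mathbf s(\ell))\in\mathbb N^\ell$, $|\mathbf s|=\sum_p\mathbf s(p)$; $\mathbf F^j$ its $j$-fold product, elements written $(\underline\ell,\underline{\mathbf s})$ with $|\underline{\mathbf s}|=(|\mathbf s_1|,\dots,|\mathbf s_j|)$. $\mathbf x(\ell,\mathbf s)=(x\otimes t^{\mathbf s(1)})\cdots(x\otimes t^{\mathbf s(\ell)})$ ($=1$ if $\ell=0$), $\mathbf x^-_j(\underline\ell,\underline{\mathbf s})=\mathbf x^-_{1,j}(\ell_1,\mathbf s_1)\cdots\mathbf x^-_{j,j}(\ell_j,\mathbf s_j)$. $\mathbf I^m=\mathbb N^m\times\mathbb N^m$ ordered by: $\underline\ell\vartriangleright\underline m$ if at the first index where they differ $\ell_s<m_s$; $\underline d\blacktriangleright\underline e$ if at the last index where they differ $d_s>e_s$; $(\underline\ell,\underline d)>(\underline m,\underline e)$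 iff $\underline\ell\vartriangleright\underline m$ or ($\underline\ell=\underline m$ and $\underline d\blacktriangleright\underline e$). On $\mathbf I^{r-1}\times\mathbf I^r$: $(\underline\ell',\underline d',\underline\ell,\underline d)>(\underline m',\underline e',\underline m,\underline e)$ iff $(\underline\ell,\underline d)>(\underline m,\underline e)$, or equal and $(\underline\ell',\underline d')>(\underline m',\underline e')$. $W(\lambda)^{\ge(\mathbf i',\mathbf i)}$ (resp. $>$) is the sum of $\mathbf U(\mathfrak g_{r-1}[t])\mathbf x^-_{r-1}(\underline\ell',\underline{\mathbf s}')\mathbf x^-_r(\underline\ell,\underline{\mathbf s})w_\lambda$, and $\mathbf U(\mathfrak n^-[t])^{\ge(\mathbf i',\mathbf i)}$ (resp. $>$) is the sum of $\mathbf U(\mathfrak n^-_{r-1}[t])\mathbf x^-_{r-1}(\underline\ell',\underline{\mathbf s}')\mathbf x^-_r(\underline\ell,\underline{\mathbf s})$, both over $(\underline\ell',\underline{\mathbf s}',\underline\ell,\underline{\mathbf s})\in\mathbf F^{r-1}\times\mathbf F^r$ with $(\underline\ell',|\underline{\mathbf s}'|,\underline\ell,|\underline{\mathbf s}|)\ge(\mathbf i',\mathbf i)$ (resp. $>$). *)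

theory Defs
  imports Complex_Main "HOL-Library.Function_Algebras"
begin

section \<open>The Lie algebra sp_2r as matrices indexed by 1..r, -r..-1\<close>

type_synonym mat = "int \<Rightarrow> int \<Rightarrow> complex"

definition Idx :: "nat \<Rightarrow> int set" where
  "Idx r = {1..int r} \<union> {- int r..-1}"

definition msc :: "complex \<Rightarrow> mat \<Rightarrow> mat" where
  "msc c A = (\<lambda>i j. c * A i j)"

definition mspan :: "mat set \<Rightarrow> mat set" where
  "mspan S = module.span msc S"

definition mmul :: "nat \<Rightarrow> mat \<Rightarrow> mat \<Rightarrow> mat" where
  "mmul r A B = (\<lambda>i j. \<Sum>k\<in>Idx r. A i k * B k j)"

definition bracket :: "nat \<Rightarrow> mat \<Rightarrow> mat \<Rightarrow> mat" where
  "bracket r A B = mmul r A B - mmul r B A"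

definition sp :: "nat \<Rightarrow> mat set" where
  "sp r = {A. (\<forall>i j. (i \<notin> Idx r \<or> j \<notin> Idx r) \<longrightarrow> A i j = 0) \<and>
              (\<forall>i\<in>Idx r. \<forall>j\<in>Idx r. A i j = - of_int (sgn i * sgn j) * A (-j) (-i))}"

definition E :: "int \<Rightarrow> int \<Rightarrow> mat" where
  "E p q = (\<lambda>i j. if i = p \<and> j = q then 1 else 0)"

text \<open>Root vectors: xp_ij i j = x^+_{i,j} = E_{i,j+1} - E_{-(j+1),-i}, xp_bar i j = x^+_{i,bar j}, etc.\<close>

definition xp_ij :: "nat \<Rightarrow> nat \<Rightarrow> mat" where
  "xp_ij i j = E (int i) (int j + 1) - E (-(int j + 1)) (- int i)"

definition xm_ij :: "nat \<Rightarrow> nat \<Rightarrow> mat" where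
  "xm_ij i j = E (int j + 1) (int i) - E (- int i) (-(int j + 1))"

definition xp_bar :: "nat \<Rightarrow> nat \<Rightarrow> mat" where
  "xp_bar i j = (if i = j then E (int i) (- int i)
                 else E (int i) (- int j) + E (int j) (- int i))"

definition xm_bar :: "nat \<Rightarrow> nat \<Rightarrow> mat" where
  "xm_bar i j = (if i = j then E (- int i) (int i)
                 else E (- int j) (int i) + E (- int i) (int j))"

text \<open>x^-_{i,j} with the convention x^-_{i,r} := x^-_{i,bar r}.\<close>
definition xminus :: "nat \<Rightarrow> nat \<Rightarrow> nat \<Rightarrow> mat" where
  "xminus r i j = (if j < r then xm_ij i j else xm_bar i r)"

definition nplus :: "nat \<Rightarrow> mat set" where
  "nplus r = mspan ({xp_ij i j | i j. 1 \<le> i \<and> i \<le> j \<and> j < r} \<union>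
                    {xp_bar i j | i j. 1 \<le> i \<and> i \<le> j \<and> j \<le> r})"

definition nminus_red :: "nat \<Rightarrow> mat set" where
  "nminus_red r = mspan ({xm_ij i j | i j. 1 \<le> i \<and> i \<le> j \<and> j < r - 1} \<union>
                         {xm_bar i j | i j. 1 \<le> i \<and> i \<le> j \<and> j \<le> r - 1})"

definition g_red :: "nat \<Rightarrow> mat set" where
  "g_red r = {A \<in> sp r. \<forall>i j. (i \<in> {int r, - int r} \<or> j \<in> {int r, - int r}) \<longrightarrow> A i j = 0}"

definition cartan :: "nat \<Rightarrow> mat set" where
  "cartan r = mspan {E (int i) (int i) - E (- int i) (- int i) | i. 1 \<le> i \<and> i \<le> r}"

text \<open>Pairing of lambda = sum m_i omega_i = sum_j (sum_{i>=j} m_i) eps_j with h in the Cartan.\<close>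
definition wt :: "nat \<Rightarrow> (nat \<Rightarrow> nat) \<Rightarrow> mat \<Rightarrow> complex" where
  "wt r m h = (\<Sum>j=1..r. of_nat (\<Sum>i=j..r. m i) * h (int j) (int j))"

text \<open>act x s v is the action of x \<otimes> t^s on v.\<close>
definition is_rep :: "nat \<Rightarrow> (complex \<Rightarrow> 'v::ab_group_add \<Rightarrow> 'v) \<Rightarrow> (mat \<Rightarrow> nat \<Rightarrow> 'v \<Rightarrow> 'v) \<Rightarrow> bool" where
  "is_rep r smult act \<longleftrightarrow>
     vector_space smult \<and>
     (\<forall>x\<in>sp r. \<forall>s. Vector_Spaces.linear smult smult (act x s)) \<and>
     (\<forall>x\<in>sp r. \<forall>y\<in>sp r. \<forall>s v. act (x + y) s v = act x s v + act y s v) \<and>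
     (\<forall>x\<in>sp r. \<forall>c s v. act (msc c x) s v = smult c (act x s v)) \<and>
     (\<forall>x\<in>sp r. \<forall>y\<in>sp r. \<forall>a b v.
        act x a (act y b v) - act y b (act x a v) = act (bracket r x y) (a + b) v)"

text \<open>U(a[t]) X: the smallest subspace containing X stable under all x \<otimes> t^s, x in a.\<close>
definition gen_sub :: "(complex \<Rightarrow> 'v::ab_group_add \<Rightarrow> 'v) \<Rightarrow> (mat \<Rightarrow> nat \<Rightarrow> 'v \<Rightarrow> 'v)
                        \<Rightarrow> mat set \<Rightarrow> 'v set \<Rightarrow> 'v set" where
  "gen_sub smult act A X =
     \<Inter>{M. X \<subseteq> M \<and> module.subspace smult M \<and> (\<forall>x\<in>A. \<forall>s. \<forall>u\<in>M. act x s u \<in> M)}"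

text \<open>w satisfies the defining relations of the local Weyl module W(lambda) and generates the module.\<close>
definition weyl_vec :: "nat \<Rightarrow> (nat \<Rightarrow> nat) \<Rightarrow> (complex \<Rightarrow> 'v::ab_group_add \<Rightarrow> 'v)
                         \<Rightarrow> (mat \<Rightarrow> nat \<Rightarrow> 'v \<Rightarrow> 'v) \<Rightarrow> 'v \<Rightarrow> bool" where
  "weyl_vec r m smult act w \<longleftrightarrow>
     (\<forall>x\<in>nplus r. \<forall>s. act x s w = 0) \<and>
     (\<forall>h\<in>cartan r. \<forall>s. act h s w = (if s = 0 then smult (wt r m h) w else 0)) \<and>
     (\<forall>i\<in>{1..r}. (act (xminus r i i) 0 ^^ (m i + 1)) w = 0) \<and>
     gen_sub smult act (sp r) {w} = UNIV"

text \<open>x(l,s) v = (x\<otimes>t^{s(1)}) ... (x\<otimes>t^{s(l)}) v, with s a sorted list of length l.\<close>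
definition xpow :: "(mat \<Rightarrow> nat \<Rightarrow> 'v \<Rightarrow> 'v) \<Rightarrow> mat \<Rightarrow> nat list \<Rightarrow> 'v \<Rightarrow> 'v" where
  "xpow act x ss v = foldr (\<lambda>s u. act x s u) ss v"

text \<open>x^-_j(S) v = x^-_{1,j}(S 1) ... x^-_{j,j}(S j) v.\<close>
definition xmono :: "nat \<Rightarrow> (mat \<Rightarrow> nat \<Rightarrow> 'v \<Rightarrow> 'v) \<Rightarrow> nat \<Rightarrow> (nat \<Rightarrow> nat list) \<Rightarrow> 'v \<Rightarrow> 'v" where
  "xmono r act j S v = foldr (\<lambda>k u. xpow act (xminus r k j) (S k) u) [1..<j+1] v"

definition lgt :: "nat \<Rightarrow> (nat \<Rightarrow> nat) \<Rightarrow> (nat \<Rightarrow> nat) \<Rightarrow> bool" where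
  "lgt n l l' \<longleftrightarrow> (\<exists>s\<in>{1..n}. (\<forall>q\<in>{1..<s}. l q = l' q) \<and> l s < l' s)"

definition dgt :: "nat \<Rightarrow> (nat \<Rightarrow> nat) \<Rightarrow> (nat \<Rightarrow> nat) \<Rightarrow> bool" where
  "dgt n d e \<longleftrightarrow> (\<exists>s\<in>{1..n}. (\<forall>q\<in>{s<..n}. d q = e q) \<and> e s < d s)"

definition eqon :: "nat \<Rightarrow> (nat \<Rightarrow> nat) \<Rightarrow> (nat \<Rightarrow> nat) \<Rightarrow> bool" where
  "eqon n f g \<longleftrightarrow> (\<forall>q\<in>{1..n}. f q = g q)"

type_synonym idx = "(nat \<Rightarrow> nat) \<times> (nat \<Rightarrow> nat)"

definition Igt :: "nat \<Rightarrow> idx \<Rightarrow> idx \<Rightarrow> bool" where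
  "Igt n a b \<longleftrightarrow> lgt n (fst a) (fst b) \<or> (eqon n (fst a) (fst b) \<and> dgt n (snd a) (snd b))"

definition Ieq :: "nat \<Rightarrow> idx \<Rightarrow> idx \<Rightarrow> bool" where
  "Ieq n a b \<longleftrightarrow> eqon n (fst a) (fst b) \<and> eqon n (snd a) (snd b)"

definition IIgt :: "nat \<Rightarrow> idx \<times> idx \<Rightarrow> idx \<times> idx \<Rightarrow> bool" where
  "IIgt r p q \<longleftrightarrow> Igt r (snd p) (snd q) \<or> (Ieq r (snd p) (snd q) \<and> Igt (r - 1) (fst p) (fst q))"

definition IIeq :: "nat \<Rightarrow> idx \<times> idx \<Rightarrow> idx \<times> idx \<Rightarrow> bool" where
  "IIeq r p q \<longleftrightarrow> Ieq r (snd p) (snd q) \<and> Ieq (r - 1) (fst p) (fst q)"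

definition IIge :: "nat \<Rightarrow> idx \<times> idx \<Rightarrow> idx \<times> idx \<Rightarrow> bool" where
  "IIge r p q \<longleftrightarrow> IIgt r p q \<or> IIeq r p q"

text \<open>(l, |s|) of an element of F^n\<close>
definition shape :: "(nat \<Rightarrow> nat list) \<Rightarrow> idx" where
  "shape S = (\<lambda>k. length (S k), \<lambda>k. sum_list (S k))"

text \<open>generators x^-_{r-1}(l',s') x^-_r(l,s) w with (l',|s'|,l,|s|) satisfying P\<close>
definition gens :: "nat \<Rightarrow> (mat \<Rightarrow> nat \<Rightarrow> 'v \<Rightarrow> 'v) \<Rightarrow> 'v \<Rightarrow> (idx \<times> idx \<Rightarrow> bool) \<Rightarrow> 'v set" where
  "gens r act w P = {xmono r act (r - 1) S' (xmono r act r S w) | S' S.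
      (\<forall>k\<in>{1..r-1}. sorted (S' k)) \<and> (\<forall>k\<in>{1..r}. sorted (S k)) \<and> P (shape S', shape S)}"

text \<open>W(lambda)^{>= i} and U(n^-[t])^{>= i} w (and strict versions)\<close>
definition W_filt :: "nat \<Rightarrow> (complex \<Rightarrow> 'v::ab_group_add \<Rightarrow> 'v) \<Rightarrow> (mat \<Rightarrow> nat \<Rightarrow> 'v \<Rightarrow> 'v) \<Rightarrow> 'v
                      \<Rightarrow> (idx \<times> idx \<Rightarrow> bool) \<Rightarrow> 'v set" where
  "W_filt r smult act w P = gen_sub smult act (g_red r) (gens r act w P)"

definition U_filt_w :: "nat \<Rightarrow> (complex \<Rightarrow> 'v::ab_group_add \<Rightarrow> 'v) \<Rightarrow> (mat \<Rightarrow> nat \<Rightarrow> 'v \<Rightarrow> 'v) \<Rightarrow> 'v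
                      \<Rightarrow> (idx \<times> idx \<Rightarrow> bool) \<Rightarrow> 'v set" where
  "U_filt_w r smult act w P = gen_sub smult act (nminus_red r) (gens r act w P)"

end

theory Submission
  imports Defs "HOL-Library.Multiset"
begin


lemma finite_Idx[simp]: "finite (Idx r)" by (simp add: Idx_def)

lemma E_apply: "E p q i j = (if i = p \<and> j = q then 1 else 0)" by (simp add: E_def)

lemma mmul_E: "mmul r (E a b) (E c d) = (if b = c \<and> b \<in> Idx r then E a d else 0)"
proof (rule ext, rule ext)
  fix i j
  have "mmul r (E a b) (E c d) i j = (\<Sum>k\<in>Idx r. if k = b then (if i = a \<and> b = c \<and> j = d then 1 else 0) else 0)"
    unfolding mmul_def E_def by (rule sum.cong) auto
  also have "\<dots> = (if b \<in> Idx r then (if i = a \<and> b = c \<and> j = d then 1 else 0) else 0)"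
    by simp
  finally show "mmul r (E a b) (E c d) i j = (if b = c \<and> b \<in> Idx r then E a d else 0) i j"
    by (auto simp: E_def)
qed

lemma mmul_add_left: "mmul r (A + B) C = mmul r A C + mmul r B C"
  by (auto simp: mmul_def fun_eq_iff algebra_simps sum.distrib)
lemma mmul_add_right: "mmul r C (A + B) = mmul r C A + mmul r C B"
  by (auto simp: mmul_def fun_eq_iff algebra_simps sum.distrib)
lemma mmul_diff_left: "mmul r (A - B) C = mmul r A C - mmul r B C"
  by (auto simp: mmul_def fun_eq_iff algebra_simps sum_subtractf)
lemma mmul_diff_right: "mmul r C (A - B) = mmul r C A - mmul r C B"
  by (auto simp: mmul_def fun_eq_iff algebra_simps sum_subtractf)
lemma mmul_zero_left: "mmul r 0 C = 0" by (auto simp: mmul_def fun_eq_iff)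
lemma mmul_zero_right: "mmul r C 0 = 0" by (auto simp: mmul_def fun_eq_iff)
lemma mmul_msc_left: "mmul r (msc c A) C = msc c (mmul r A C)"
  by (auto simp: mmul_def msc_def fun_eq_iff algebra_simps sum_distrib_left)
lemma mmul_msc_right: "mmul r C (msc c A) = msc c (mmul r C A)"
  by (auto simp: mmul_def msc_def fun_eq_iff algebra_simps sum_distrib_left)

lemmas mmul_simps = mmul_E mmul_add_left mmul_add_right mmul_diff_left mmul_diff_right
  mmul_zero_left mmul_zero_right mmul_msc_left mmul_msc_right

definition hh :: "nat \<Rightarrow> mat" where "hh j = E (int j) (int j) - E (- int j) (- int j)"

lemma X1_eq: "1 \<le> r \<Longrightarrow> xm_ij k (r - 1) = E (int r) (int k) - E (- int k) (- int r)"
  by (simp add: xm_ij_def of_nat_diff)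

lemma Idx_mem: "x \<in> Idx r \<longleftrightarrow> (1 \<le> x \<and> x \<le> int r) \<or> (- int r \<le> x \<and> x \<le> -1)"
  by (auto simp: Idx_def)


definition X1 :: "nat \<Rightarrow> nat \<Rightarrow> mat" where "X1 r k = E (int r) (int k) - E (- int k) (- int r)"
definition X2 :: "nat \<Rightarrow> nat \<Rightarrow> mat" where
  "X2 r k = (if k = r then E (- int r) (int r) else E (- int r) (int k) + E (- int k) (int r))"
definition PP :: "nat \<Rightarrow> nat \<Rightarrow> mat" where "PP r c = E (int c) (- int r) + E (int r) (- int c)"
definition QQ :: "nat \<Rightarrow> nat \<Rightarrow> mat" where "QQ r c = E (int c) (int r) - E (- int r) (- int c)"
definition RR :: "nat \<Rightarrow> mat" where "RR r = E (int r) (- int r)"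
definition Hp :: "nat \<Rightarrow> nat \<Rightarrow> mat" where "Hp r c = hh c + hh r"

lemma xminus_X1: "1 \<le> r \<Longrightarrow> xminus r k (r - 1) = X1 r k"
  by (simp add: xminus_def xm_ij_def X1_def of_nat_diff)
lemma xminus_X2: "xminus r k r = X2 r k"
  by (simp add: xminus_def xm_bar_def X2_def)
lemma PP_eq: "c < r \<Longrightarrow> xp_bar c r = PP r c" by (simp add: xp_bar_def PP_def)
lemma QQ_eq: "1 \<le> r \<Longrightarrow> xp_ij c (r - 1) = QQ r c" by (simp add: xp_ij_def QQ_def of_nat_diff)
lemma RR_eq: "xp_bar r r = RR r" by (simp add: xp_bar_def RR_def)

lemma bracket_add_left: "bracket r (A + B) C = bracket r A C + bracket r B C"
  by (simp add: bracket_def mmul_simps)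
lemma bracket_msc_left: "bracket r (msc c A) C = msc c (bracket r A C)"
  unfolding bracket_def mmul_msc_left mmul_msc_right by (simp add: msc_def fun_eq_iff algebra_simps)


lemma br_X1_X1: "1 \<le> k \<Longrightarrow> k < r \<Longrightarrow> 1 \<le> k' \<Longrightarrow> k' < r \<Longrightarrow> bracket r (X1 r k) (X1 r k') = 0"
  by (simp add: bracket_def mmul_simps Idx_mem X1_def; auto simp: fun_eq_iff E_def msc_def)
lemma br_X2_X2: "1 \<le> k \<Longrightarrow> k \<le> r \<Longrightarrow> 1 \<le> k' \<Longrightarrow> k' \<le> r \<Longrightarrow> bracket r (X2 r k) (X2 r k') = 0"
  by (simp add: bracket_def mmul_simps Idx_mem X2_def; auto simp: fun_eq_iff E_def msc_def)
lemma br_h_X1: "1 \<le> j \<Longrightarrow> j < r \<Longrightarrow> 1 \<le> k \<Longrightarrow> k < r \<Longrightarrow>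
  bracket r (hh j) (X1 r k) = (if j = k then msc (-1) (X1 r k) else 0)"
  by (simp add: bracket_def mmul_simps Idx_mem X1_def hh_def; auto simp: fun_eq_iff E_def msc_def)
lemma br_h_X2: "1 \<le> j \<Longrightarrow> j \<le> r \<Longrightarrow> 1 \<le> k \<Longrightarrow> k \<le> r \<Longrightarrow>
  bracket r (hh j) (X2 r k) = msc (if j = r then (if k = r then -2 else -1) else (if j = k then -1 else 0)) (X2 r k)"
  by (simp add: bracket_def mmul_simps Idx_mem X2_def hh_def; auto simp: fun_eq_iff E_def msc_def)
lemma br_xpij_X1: "1 \<le> a \<Longrightarrow> a \<le> b \<Longrightarrow> b + 1 < r \<Longrightarrow> 1 \<le> k \<Longrightarrow> k < r \<Longrightarrow>
  bracket r (xp_ij a b) (X1 r k) = (if k = a then msc (-1) (X1 r (b + 1)) else 0)"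
  by (simp add: bracket_def mmul_simps Idx_mem X1_def xp_ij_def; auto simp: fun_eq_iff E_def msc_def)
lemma br_xpij_X2: "1 \<le> a \<Longrightarrow> a \<le> b \<Longrightarrow> b + 1 < r \<Longrightarrow> 1 \<le> k \<Longrightarrow> k \<le> r \<Longrightarrow>
  bracket r (xp_ij a b) (X2 r k) = (if k = a then msc (-1) (X2 r (b + 1)) else 0)"
  by (simp add: bracket_def mmul_simps Idx_mem X2_def xp_ij_def; auto simp: fun_eq_iff E_def msc_def)
lemma br_xpbar_X1: "1 \<le> a \<Longrightarrow> a \<le> b \<Longrightarrow> b < r \<Longrightarrow> 1 \<le> k \<Longrightarrow> k < r \<Longrightarrow>
  bracket r (xp_bar a b) (X1 r k) = (if k = a then msc (-1) (PP r b) else if k = b then msc (-1) (PP r a) else 0)"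
  by (simp add: bracket_def mmul_simps Idx_mem X1_def xp_bar_def PP_def; auto simp: fun_eq_iff E_def msc_def)
lemma br_xpbar_X2: "1 \<le> a \<Longrightarrow> a \<le> b \<Longrightarrow> b < r \<Longrightarrow> 1 \<le> k \<Longrightarrow> k \<le> r \<Longrightarrow>
  bracket r (xp_bar a b) (X2 r k) = (if k = a then QQ r b else if k = b then QQ r a else 0)"
  by (simp add: bracket_def mmul_simps Idx_mem X2_def xp_bar_def QQ_def; auto simp: fun_eq_iff E_def msc_def)
lemma br_PP_X1: "1 \<le> c \<Longrightarrow> c < r \<Longrightarrow> 1 \<le> k \<Longrightarrow> k < r \<Longrightarrow>
  bracket r (PP r c) (X1 r k) = (if k = c then msc (-2) (RR r) else 0)"
  by (simp add: bracket_def mmul_simps Idx_mem X1_def PP_def RR_def; auto simp: fun_eq_iff E_def msc_def)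
lemma br_PP_X2: "1 \<le> c \<Longrightarrow> c < r \<Longrightarrow> 1 \<le> k \<Longrightarrow> k \<le> r \<Longrightarrow>
  bracket r (PP r c) (X2 r k) = (if k = c then Hp r c else if k < c then xm_ij k (c - 1)
     else if k < r then xp_ij c (k - 1) else QQ r c)"
  by (simp add: bracket_def mmul_simps Idx_mem X2_def PP_def Hp_def hh_def xm_ij_def xp_ij_def QQ_def of_nat_diff; auto simp: fun_eq_iff E_def msc_def)
lemma br_QQ_X2: "1 \<le> c \<Longrightarrow> c < r \<Longrightarrow> 1 \<le> k \<Longrightarrow> k \<le> r \<Longrightarrow>
  bracket r (QQ r c) (X2 r k) = (if k = c then msc (-2) (X2 r r) else 0)"
  by (simp add: bracket_def mmul_simps Idx_mem X2_def QQ_def; auto simp: fun_eq_iff E_def msc_def)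
lemma br_X1_xmij: "1 \<le> a \<Longrightarrow> a \<le> b \<Longrightarrow> b + 1 < r \<Longrightarrow> 1 \<le> k \<Longrightarrow> k < r \<Longrightarrow>
  bracket r (X1 r k) (xm_ij a b) = (if k = b + 1 then X1 r a else 0)"
  by (simp add: bracket_def mmul_simps Idx_mem X1_def xm_ij_def; auto simp: fun_eq_iff E_def msc_def)
lemma br_X2_xmij: "1 \<le> a \<Longrightarrow> a \<le> b \<Longrightarrow> b + 1 < r \<Longrightarrow> 1 \<le> k \<Longrightarrow> k \<le> r \<Longrightarrow>
  bracket r (X2 r k) (xm_ij a b) = (if k = b + 1 then X2 r a else 0)"
  by (simp add: bracket_def mmul_simps Idx_mem X2_def xm_ij_def; auto simp: fun_eq_iff E_def msc_def)
lemma br_X2_X1: "1 \<le> k \<Longrightarrow> k < r \<Longrightarrow> 1 \<le> k' \<Longrightarrow> k' \<le> r \<Longrightarrow>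
  bracket r (X2 r k') (X1 r k) = (if k' = r then X2 r k else if k' = k then msc 2 (xm_bar k k)
     else xm_bar (min k k') (max k k'))"
  by (simp add: bracket_def mmul_simps Idx_mem X2_def X1_def xm_bar_def; auto simp: fun_eq_iff E_def msc_def)
lemma br_RR_X1: "1 \<le> k \<Longrightarrow> k < r \<Longrightarrow> bracket r (RR r) (X1 r k) = 0"
  by (simp add: bracket_def mmul_simps Idx_mem X1_def RR_def; auto simp: fun_eq_iff E_def msc_def)
lemma br_RR_X2: "1 \<le> k \<Longrightarrow> k \<le> r \<Longrightarrow> bracket r (RR r) (X2 r k) = (if k = r then hh r else X1 r k)"
  by (simp add: bracket_def mmul_simps Idx_mem X2_def X1_def RR_def hh_def; auto simp: fun_eq_iff E_def msc_def)
lemma br_X1_xmbar: "1 \<le> a \<Longrightarrow> a \<le> b \<Longrightarrow> b < r \<Longrightarrow> 1 \<le> k \<Longrightarrow> k < r \<Longrightarrow>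
  bracket r (X1 r k) (xm_bar a b) = 0"
  by (simp add: bracket_def mmul_simps Idx_mem X1_def xm_bar_def; auto simp: fun_eq_iff E_def msc_def)
lemma br_X2_xmbar: "1 \<le> a \<Longrightarrow> a \<le> b \<Longrightarrow> b < r \<Longrightarrow> 1 \<le> k \<Longrightarrow> k \<le> r \<Longrightarrow>
  bracket r (X2 r k) (xm_bar a b) = 0"
  by (simp add: bracket_def mmul_simps Idx_mem X2_def xm_bar_def; auto simp: fun_eq_iff E_def msc_def)


lemma sgn_int_pos: "1 \<le> k \<Longrightarrow> sgn (int k) = 1" by simp
lemma sgn_int_neg: "1 \<le> k \<Longrightarrow> sgn (- int k) = -1" by simp

lemma sp_X1: "1 \<le> k \<Longrightarrow> k < r \<Longrightarrow> X1 r k \<in> sp r"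
  unfolding sp_def by (auto simp: X1_def E_def Idx_mem)
lemma sp_X2: "1 \<le> k \<Longrightarrow> k \<le> r \<Longrightarrow> X2 r k \<in> sp r"
  unfolding sp_def by (auto simp: X2_def E_def Idx_mem)
lemma sp_PP: "1 \<le> c \<Longrightarrow> c < r \<Longrightarrow> PP r c \<in> sp r"
  unfolding sp_def by (auto simp: PP_def E_def Idx_mem)
lemma sp_QQ: "1 \<le> c \<Longrightarrow> c < r \<Longrightarrow> QQ r c \<in> sp r"
  unfolding sp_def by (auto simp: QQ_def E_def Idx_mem)
lemma sp_RR: "1 \<le> r \<Longrightarrow> RR r \<in> sp r"
  unfolding sp_def by (auto simp: RR_def E_def Idx_mem)
lemma sp_hh: "1 \<le> j \<Longrightarrow> j \<le> r \<Longrightarrow> hh j \<in> sp r"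
  unfolding sp_def by (auto simp: hh_def E_def Idx_mem)
lemma sp_xp_ij: "1 \<le> a \<Longrightarrow> a \<le> b \<Longrightarrow> b < r \<Longrightarrow> xp_ij a b \<in> sp r"
  unfolding sp_def by (auto simp: xp_ij_def E_def Idx_mem)
lemma sp_xm_ij: "1 \<le> a \<Longrightarrow> a \<le> b \<Longrightarrow> b < r \<Longrightarrow> xm_ij a b \<in> sp r"
  unfolding sp_def by (auto simp: xm_ij_def E_def Idx_mem)
lemma sp_xp_bar: "1 \<le> a \<Longrightarrow> a \<le> b \<Longrightarrow> b \<le> r \<Longrightarrow> xp_bar a b \<in> sp r"
  unfolding sp_def by (auto simp: xp_bar_def E_def Idx_mem)
lemma sp_xm_bar: "1 \<le> a \<Longrightarrow> a \<le> b \<Longrightarrow> b \<le> r \<Longrightarrow> xm_bar a b \<in> sp r"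
  unfolding sp_def by (auto simp: xm_bar_def E_def Idx_mem)
lemma sp_add: "A \<in> sp r \<Longrightarrow> B \<in> sp r \<Longrightarrow> A + B \<in> sp r"
  unfolding sp_def by (auto simp: algebra_simps)
lemma sp_msc: "A \<in> sp r \<Longrightarrow> msc c A \<in> sp r"
  unfolding sp_def msc_def by (auto simp: algebra_simps)
lemma sp_zero: "0 \<in> sp r"
  unfolding sp_def by auto
lemma sp_Hp: "1 \<le> c \<Longrightarrow> c \<le> r \<Longrightarrow> Hp r c \<in> sp r"
  unfolding Hp_def by (intro sp_add sp_hh) auto

lemma module_msc: "module msc"
  by unfold_locales (auto simp: msc_def fun_eq_iff algebra_simps)

lemma mspan_base: "x \<in> S \<Longrightarrow> x \<in> mspan S"
  unfolding mspan_def using module.span_base[OF module_msc] by blast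




lemma xp_ij_nplus: "1 \<le> a \<Longrightarrow> a \<le> b \<Longrightarrow> b < r \<Longrightarrow> xp_ij a b \<in> nplus r"
  unfolding nplus_def by (rule mspan_base) blast
lemma xp_bar_nplus: "1 \<le> a \<Longrightarrow> a \<le> b \<Longrightarrow> b \<le> r \<Longrightarrow> xp_bar a b \<in> nplus r"
  unfolding nplus_def by (rule mspan_base) blast
lemma xm_ij_nminus: "1 \<le> a \<Longrightarrow> a \<le> b \<Longrightarrow> b < r - 1 \<Longrightarrow> xm_ij a b \<in> nminus_red r"
  unfolding nminus_red_def by (rule mspan_base) blast
lemma xm_bar_nminus: "1 \<le> a \<Longrightarrow> a \<le> b \<Longrightarrow> b \<le> r - 1 \<Longrightarrow> xm_bar a b \<in> nminus_red r"
  unfolding nminus_red_def by (rule mspan_base) blast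
lemma hh_cartan: "1 \<le> j \<Longrightarrow> j \<le> r \<Longrightarrow> hh j \<in> cartan r"
  unfolding cartan_def hh_def by (rule mspan_base) blast
lemma Hp_cartan: "1 \<le> c \<Longrightarrow> c \<le> r \<Longrightarrow> Hp r c \<in> cartan r"
proof -
  assume a: "1 \<le> c" "c \<le> r"
  have "hh c \<in> cartan r" "hh r \<in> cartan r" using a hh_cartan by auto
  then show ?thesis unfolding Hp_def cartan_def mspan_def
    using module.span_add[OF module_msc] by blast
qed


section \<open>Orders\<close>

lemma lgt_trans: "lgt n a b \<Longrightarrow> lgt n b c \<Longrightarrow> lgt n a c"
proof -
  assume "lgt n a b" "lgt n b c"
  then obtain s1 s2 where 1: "s1 \<in> {1..n}" "\<forall>q\<in>{1..<s1}. a q = b q" "a s1 < b s1"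
    and 2: "s2 \<in> {1..n}" "\<forall>q\<in>{1..<s2}. b q = c q" "b s2 < c s2"
    unfolding lgt_def by blast
  show ?thesis unfolding lgt_def
  proof (cases s1 s2 rule: linorder_cases)
    case less
    then show "\<exists>s\<in>{1..n}. (\<forall>q\<in>{1..<s}. a q = c q) \<and> a s < c s"
      using 1 2 by (intro bexI[of _ s1]) auto
  next
    case equal
    then show "\<exists>s\<in>{1..n}. (\<forall>q\<in>{1..<s}. a q = c q) \<and> a s < c s"
      using 1 2 by (intro bexI[of _ s1]) auto
  next
    case greater
    then show "\<exists>s\<in>{1..n}. (\<forall>q\<in>{1..<s}. a q = c q) \<and> a s < c s"
      using 1 2 by (intro bexI[of _ s2]) auto
  qed
qed

lemma lgt_eqon: "lgt n a b \<Longrightarrow> eqon n b c \<Longrightarrow> lgt n a c"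
  unfolding lgt_def eqon_def by fastforce
lemma eqon_lgt: "eqon n a b \<Longrightarrow> lgt n b c \<Longrightarrow> lgt n a c"
  unfolding lgt_def eqon_def by fastforce

lemma dgt_trans: "dgt n a b \<Longrightarrow> dgt n b c \<Longrightarrow> dgt n a c"
proof -
  assume "dgt n a b" "dgt n b c"
  then obtain s1 s2 where 1: "s1 \<in> {1..n}" "\<forall>q\<in>{s1<..n}. a q = b q" "b s1 < a s1"
    and 2: "s2 \<in> {1..n}" "\<forall>q\<in>{s2<..n}. b q = c q" "c s2 < b s2"
    unfolding dgt_def by blast
  show ?thesis unfolding dgt_def
  proof (cases s1 s2 rule: linorder_cases)
    case less
    then show "\<exists>s\<in>{1..n}. (\<forall>q\<in>{s<..n}. a q = c q) \<and> c s < a s"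
      using 1 2 by (intro bexI[of _ s2]) auto
  next
    case equal
    then show "\<exists>s\<in>{1..n}. (\<forall>q\<in>{s<..n}. a q = c q) \<and> c s < a s"
      using 1 2 by (intro bexI[of _ s1]) auto
  next
    case greater
    then show "\<exists>s\<in>{1..n}. (\<forall>q\<in>{s<..n}. a q = c q) \<and> c s < a s"
      using 1 2 by (intro bexI[of _ s1]) auto
  qed
qed

lemma dgt_eqon: "dgt n a b \<Longrightarrow> eqon n b c \<Longrightarrow> dgt n a c"
  unfolding dgt_def eqon_def by fastforce
lemma eqon_dgt: "eqon n a b \<Longrightarrow> dgt n b c \<Longrightarrow> dgt n a c"
  unfolding dgt_def eqon_def by fastforce
lemma eqon_trans: "eqon n a b \<Longrightarrow> eqon n b c \<Longrightarrow> eqon n a c"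
  unfolding eqon_def by auto
lemma eqon_refl: "eqon n a a" unfolding eqon_def by auto

lemma Igt_trans: "Igt n a b \<Longrightarrow> Igt n b c \<Longrightarrow> Igt n a c"
  unfolding Igt_def by (meson lgt_trans lgt_eqon eqon_lgt eqon_trans dgt_trans)
lemma Igt_Ieq: "Igt n a b \<Longrightarrow> Ieq n b c \<Longrightarrow> Igt n a c"
  unfolding Igt_def Ieq_def by (meson lgt_eqon eqon_trans dgt_eqon)
lemma Ieq_Igt: "Ieq n a b \<Longrightarrow> Igt n b c \<Longrightarrow> Igt n a c"
  unfolding Igt_def Ieq_def by (meson eqon_lgt eqon_trans eqon_dgt)
lemma Ieq_trans: "Ieq n a b \<Longrightarrow> Ieq n b c \<Longrightarrow> Ieq n a c"
  unfolding Ieq_def by (meson eqon_trans)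

lemma IIge_IIge: "IIge r p q \<Longrightarrow> IIge r q u \<Longrightarrow> IIge r p u"
  unfolding IIge_def IIgt_def IIeq_def by (meson Igt_trans Igt_Ieq Ieq_Igt Ieq_trans)
lemma IIge_IIgt: "IIge r p q \<Longrightarrow> IIgt r q u \<Longrightarrow> IIgt r p u"
  unfolding IIge_def IIgt_def IIeq_def by (meson Igt_trans Igt_Ieq Ieq_Igt Ieq_trans)

definition upc :: "nat \<Rightarrow> (idx \<times> idx \<Rightarrow> bool) \<Rightarrow> bool" where
  "upc r P \<longleftrightarrow> (\<forall>p q. IIge r p q \<longrightarrow> P q \<longrightarrow> P p)"

lemma upc_ge: "upc r (\<lambda>p. IIge r p q0)" unfolding upc_def using IIge_IIge by blast
lemma upc_gt: "upc r (\<lambda>p. IIgt r p q0)" unfolding upc_def using IIge_IIgt by blast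

lemma lgt_multiset:
  assumes "M' + A = M + B" "A \<noteq> {#}" "set_mset A \<subseteq> {1..n}" "\<And>a b. a \<in># A \<Longrightarrow> b \<in># B \<Longrightarrow> a < b"
  shows "lgt n (count M') (count M)"
proof -
  define s where "s = Min (set_mset A)"
  have sA: "s \<in># A" unfolding s_def using assms(2) by (simp add: Min_in)
  have smin: "a \<in># A \<Longrightarrow> s \<le> a" for a unfolding s_def by simp
  have eq: "count M' q + count A q = count M q + count B q" for q
    using arg_cong[OF assms(1), of "\<lambda>X. count X q"] by simp
  have B0: "count B q = 0" if "q \<le> s" for q
    using assms(4)[OF sA] that by (metis count_eq_zero_iff leD)
  have A0: "count A q = 0" if "q < s" for q
    using smin that by (metis count_eq_zero_iff leD)
  show ?thesis unfolding lgt_def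
  proof (intro bexI[of _ s] conjI ballI)
    fix q assume "q \<in> {1..<s}"
    then show "count M' q = count M q" using eq[of q] A0[of q] B0[of q] by auto
  next
    have "count A s > 0" using sA by simp
    then show "count M' s < count M s" using eq[of s] B0[of s] by linarith
  next
    show "s \<in> {1..n}" using sA assms(3) by auto
  qed
qed

lemma dgt_or_eqon: "(\<And>q. d q \<le> d' q) \<Longrightarrow> dgt n d' d \<or> eqon n d' d"
proof (rule disjCI)
  assume le: "\<And>q. d q \<le> d' q" and ne: "\<not> eqon n d' d"
  define S where "S = {q\<in>{1..n}. d' q \<noteq> d q}"
  have "S \<noteq> {}" using ne unfolding S_def eqon_def by auto
  moreover have fS: "finite S" unfolding S_def by auto
  ultimately have sS: "Max S \<in> S" by (rule Max_in[rotated])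
  show "dgt n d' d" unfolding dgt_def
  proof (intro bexI[of _ "Max S"] conjI ballI)
    fix q assume q: "q \<in> {Max S<..n}"
    show "d' q = d q"
    proof (rule ccontr)
      assume "d' q \<noteq> d q"
      then have "q \<in> S" using q sS unfolding S_def by auto
      then show False using q fS by (meson Max_ge greaterThanAtMost_iff leD)
    qed
  next
    show "d (Max S) < d' (Max S)" using sS le[of "Max S"] unfolding S_def by auto
  next
    show "Max S \<in> {1..n}" using sS unfolding S_def by auto
  qed
qed

definition lin :: "(complex \<Rightarrow> 'v::ab_group_add \<Rightarrow> 'v) \<Rightarrow> ('v \<Rightarrow> 'v) \<Rightarrow> bool" where
  "lin sm f \<longleftrightarrow> (\<forall>u v. f (u + v) = f u + f v) \<and> (\<forall>c u. f (sm c u) = sm c (f u))"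

locale WS =
  fixes r :: nat and m :: "nat \<Rightarrow> nat" and smult :: "complex \<Rightarrow> 'v::ab_group_add \<Rightarrow> 'v"
    and act :: "mat \<Rightarrow> nat \<Rightarrow> 'v \<Rightarrow> 'v" and w :: 'v
  assumes r1: "1 \<le> r" and rep: "is_rep r smult act" and wv: "weyl_vec r m smult act w"
begin

lemma vs: "vector_space smult" using rep by (simp add: is_rep_def)

sublocale V: vector_space smult by (rule vs)

lemma act_lin: "x \<in> sp r \<Longrightarrow> lin smult (act x s)"
proof -
  assume "x \<in> sp r"
  then have "Vector_Spaces.linear smult smult (act x s)" using rep by (simp add: is_rep_def)
  then interpret L: Vector_Spaces.linear smult smult "act x s" .
  show ?thesis unfolding lin_def using L.add L.scale by blast
qed

lemma lin_zero: "lin smult f \<Longrightarrow> f 0 = 0"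
proof -
  assume "lin smult f"
  then have "f (smult 0 0) = smult 0 (f 0)" unfolding lin_def by blast
  then show "f 0 = 0" by simp
qed
lemma lin_add: "lin smult f \<Longrightarrow> f (u + v) = f u + f v" unfolding lin_def by blast
lemma lin_scale: "lin smult f \<Longrightarrow> f (smult c u) = smult c (f u)" unfolding lin_def by blast
lemma lin_diff: "lin smult f \<Longrightarrow> f (u - v) = f u - f v"
proof -
  assume "lin smult f"
  then have "f (u - v + v) = f (u - v) + f v" by (rule lin_add)
  then show ?thesis by (simp add: algebra_simps)
qed
lemma lin_neg: "lin smult f \<Longrightarrow> f (- u) = - f u"
  using lin_diff[of f 0 u] lin_zero[of f] by simp
lemma lin_comp: "lin smult f \<Longrightarrow> lin smult g \<Longrightarrow> lin smult (f \<circ> g)"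
  unfolding lin_def by simp
lemma lin_id: "lin smult id" unfolding lin_def by simp

lemma lin_span_sub:
  assumes "lin smult f" "V.subspace T" "\<And>x. x \<in> S \<Longrightarrow> f x \<in> T" "v \<in> V.span S"
  shows "f v \<in> T"
proof -
  have "V.subspace {v. f v \<in> T}"
    using assms(1,2) by (auto simp: V.subspace_def lin_zero lin_add lin_scale)
  moreover have "S \<subseteq> {v. f v \<in> T}" using assms(3) by auto
  ultimately have "V.span S \<subseteq> {v. f v \<in> T}" by (rule V.span_minimal[rotated])
  then show ?thesis using assms(4) by auto
qed

lemma act_add_x: "x \<in> sp r \<Longrightarrow> y \<in> sp r \<Longrightarrow> act (x + y) s v = act x s v + act y s v"
  using rep by (simp add: is_rep_def)
lemma act_msc: "x \<in> sp r \<Longrightarrow> act (msc c x) s v = smult c (act x s v)"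
  using rep by (simp add: is_rep_def)
lemma act_zero_mat: "act 0 s v = 0"
proof -
  have "msc 0 (0::mat) = 0" by (simp add: msc_def fun_eq_iff)
  then have "act 0 s v = act (msc 0 0) s v" by simp
  also have "\<dots> = smult 0 (act 0 s v)" by (rule act_msc) (rule sp_zero)
  finally show ?thesis by simp
qed
lemma act_comm: "x \<in> sp r \<Longrightarrow> y \<in> sp r \<Longrightarrow>
   act x a (act y b v) = act y b (act x a v) + act (bracket r x y) (a + b) v"
proof -
  assume "x \<in> sp r" "y \<in> sp r"
  then have "act x a (act y b v) - act y b (act x a v) = act (bracket r x y) (a + b) v"
    using rep unfolding is_rep_def by blast
  then show ?thesis by (simp add: algebra_simps)
qed


definition wd :: "(nat \<Rightarrow> mat) \<Rightarrow> (nat \<times> nat) list \<Rightarrow> 'v \<Rightarrow> 'v" where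
  "wd X L v = foldr (\<lambda>(k, a) u. act (X k) a u) L v"

lemma wd_Nil[simp]: "wd X [] v = v" by (simp add: wd_def)
lemma wd_Cons[simp]: "wd X ((k, a) # L) v = act (X k) a (wd X L v)" by (simp add: wd_def)
lemma wd_append: "wd X (A @ B) v = wd X A (wd X B v)" by (simp add: wd_def)

lemma wd_lin: "(\<And>p. p \<in> set L \<Longrightarrow> X (fst p) \<in> sp r) \<Longrightarrow> lin smult (wd X L)"
proof (induction L)
  case Nil
  then show ?case unfolding lin_def by simp
next
  case (Cons p L)
  obtain k a where p: "p = (k, a)" by force
  have "X k \<in> sp r" using Cons.prems[of p] p by simp
  then have "lin smult (act (X k) a)" by (rule act_lin)
  moreover have "lin smult (wd X L)" using Cons by auto
  ultimately have "lin smult (act (X k) a \<circ> wd X L)" by (rule lin_comp)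
  moreover have "wd X (p # L) = act (X k) a \<circ> wd X L" using p by (auto simp: fun_eq_iff)
  ultimately show ?case by (simp add: comp_def)
qed

lemma wd_comm_letter:
  assumes "\<And>p v. p \<in> set A \<Longrightarrow> act (X (fst p)) (snd p) (act Y b v) = act Y b (act (X (fst p)) (snd p) v)"
  shows "wd X A (act Y b v) = act Y b (wd X A v)"
  using assms
proof (induction A)
  case Nil
  then show ?case by simp
next
  case (Cons p A)
  obtain k a where p: "p = (k, a)" by force
  have "wd X (p # A) (act Y b v) = act (X k) a (act Y b (wd X A v))" using Cons p by simp
  also have "\<dots> = act Y b (act (X k) a (wd X A v))" using Cons.prems[of p] p by simp
  finally show ?case using p by simp
qed

lemma wd_perm:
  assumes "mset L = mset L'"
    and "\<And>p q v. p \<in> set L \<Longrightarrow> q \<in> set L \<Longrightarrow>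
      act (X (fst p)) (snd p) (act (X (fst q)) (snd q) v) = act (X (fst q)) (snd q) (act (X (fst p)) (snd p) v)"
  shows "wd X L v = wd X L' v"
  using assms
proof (induction L arbitrary: L')
  case Nil
  then show ?case by simp
next
  case (Cons p L)
  have "p \<in> set L'" using Cons.prems(1) by (metis list.set_intros(1) set_mset_mset)
  then obtain A B where L': "L' = A @ p # B" by (meson split_list)
  obtain k a where p: "p = (k, a)" by force
  have mAB: "mset L = mset (A @ B)" using Cons.prems(1) L' by simp
  have setA: "set A \<subseteq> set (p # L)"
    using Cons.prems(1) L' by (metis mset_eq_setD set_append sup.cobounded1)
  have "wd X L' v = wd X A (act (X k) a (wd X B v))" using L' p by (simp add: wd_append)
  also have "\<dots> = act (X k) a (wd X A (wd X B v))"
    using Cons.prems(2) setA p by (intro wd_comm_letter) fastforce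
  also have "\<dots> = act (X k) a (wd X (A @ B) v)" by (simp add: wd_append)
  also have "wd X (A @ B) v = wd X L v"
    using Cons.IH[OF mAB] Cons.prems(2) by (metis set_subset_Cons subsetD)
  finally show ?case using p by simp
qed

lemma xpow_wd: "xpow act (X k) ss v = wd X (map (Pair k) ss) v"
  by (induction ss) (auto simp: xpow_def)

lemma foldr_xpow_wd:
  "foldr (\<lambda>k u. xpow act (X k) (S k) u) ks v = wd X (concat (map (\<lambda>k. map (Pair k) (S k)) ks)) v"
  by (induction ks) (auto simp: xpow_wd wd_append)

definition srt :: "(nat \<times> nat) list \<Rightarrow> nat \<Rightarrow> nat list" where
  "srt L k = sort (map snd (filter (\<lambda>p. fst p = k) L))"

definition cnt :: "(nat \<times> nat) list \<Rightarrow> nat \<Rightarrow> nat" where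
  "cnt L k = count (mset (map fst L)) k"
definition dsum :: "(nat \<times> nat) list \<Rightarrow> nat \<Rightarrow> nat" where
  "dsum L k = sum_list (map snd (filter (\<lambda>p. fst p = k) L))"
definition shp :: "(nat \<times> nat) list \<Rightarrow> idx" where
  "shp L = (cnt L, dsum L)"

lemma shape_srt: "shape (srt L) = shp L"
proof -
  have len: "length (filter (\<lambda>p. fst p = k) L) = count (mset (map fst L)) k" for k
    by (induction L) auto
  have "sum_list (sort xs) = sum_list xs" for xs :: "nat list"
    by (metis mset_sort sum_mset_sum_list)
  then show ?thesis
    unfolding shape_def shp_def cnt_def dsum_def srt_def using len by (auto simp: fun_eq_iff)
qed

lemma mset_flat:
  assumes "\<And>p. p \<in> set L \<Longrightarrow> fst p \<in> set ks" "distinct ks"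
  shows "mset (concat (map (\<lambda>k. map (Pair k) (srt L k)) ks)) = mset L"
proof -
  have e: "mset (map (Pair k) (srt L k)) = mset (filter (\<lambda>p. fst p = k) L)" for k
  proof -
    have "mset (map (Pair k) (srt L k)) = image_mset (Pair k) (mset (map snd (filter (\<lambda>p. fst p = k) L)))"
      by (simp add: srt_def)
    also have "\<dots> = mset (map (Pair k) (map snd (filter (\<lambda>p. fst p = k) L)))" by (simp only: mset_map)
    also have "map (Pair k) (map snd (filter (\<lambda>p. fst p = k) L)) = filter (\<lambda>p. fst p = k) L"
      by (induction L) auto
    finally show ?thesis .
  qed
  have "mset (concat (map (\<lambda>k. map (Pair k) (srt L k)) ks)) = (\<Sum>k\<leftarrow>ks. mset (filter (\<lambda>p. fst p = k) L))"
  proof -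
    have e': "image_mset (Pair k) (mset (srt L k)) = filter_mset (\<lambda>p. fst p = k) (mset L)" for k
      using e[of k] by simp
    show ?thesis by (simp add: mset_concat e' comp_def)
  qed
  also have "\<dots> = mset L" using assms
  proof (induction L)
    case Nil
    then show ?case by (induction ks) auto
  next
    case (Cons p L)
    have "(\<Sum>k\<leftarrow>ks. mset (filter (\<lambda>q. fst q = k) (p # L))) =
          (\<Sum>k\<leftarrow>ks. (if fst p = k then {#p#} else {#}) + mset (filter (\<lambda>q. fst q = k) L))"
      by (rule arg_cong[where f=sum_list], rule map_cong) auto
    also have "\<dots> = (\<Sum>k\<leftarrow>ks. (if fst p = k then {#p#} else {#})) + (\<Sum>k\<leftarrow>ks. mset (filter (\<lambda>q. fst q = k) L))"
      by (simp add: sum_list_addf)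
    also have "(\<Sum>k\<leftarrow>ks. (if fst p = k then {#p#} else {#})) = (\<Sum>k\<in>set ks. (if fst p = k then {#p#} else {#}))"
      using Cons.prems(2) by (simp add: sum_list_distinct_conv_sum_set)
    also have "\<dots> = {#p#}" using Cons.prems(1)[of p] by (simp add: sum.delta)
    finally show ?case using Cons by simp
  qed
  finally show ?thesis .
qed


definition valid1 :: "(nat \<times> nat) list \<Rightarrow> bool" where
  "valid1 L \<longleftrightarrow> (\<forall>p\<in>set L. 1 \<le> fst p \<and> fst p < r)"
definition valid2 :: "(nat \<times> nat) list \<Rightarrow> bool" where
  "valid2 L \<longleftrightarrow> (\<forall>p\<in>set L. 1 \<le> fst p \<and> fst p \<le> r)"

abbreviation W1 where "W1 \<equiv> wd (X1 r)"
abbreviation W2 where "W2 L \<equiv> wd (X2 r) L w"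

lemma valid1_Cons[simp]: "valid1 ((k, a) # L) \<longleftrightarrow> 1 \<le> k \<and> k < r \<and> valid1 L"
  by (auto simp: valid1_def)
lemma valid2_Cons[simp]: "valid2 ((k, a) # L) \<longleftrightarrow> 1 \<le> k \<and> k \<le> r \<and> valid2 L"
  by (auto simp: valid2_def)
lemma valid1_Nil[simp]: "valid1 []" by (simp add: valid1_def)
lemma valid2_Nil[simp]: "valid2 []" by (simp add: valid2_def)
lemma valid1_append[simp]: "valid1 (A @ B) \<longleftrightarrow> valid1 A \<and> valid1 B" by (auto simp: valid1_def)
lemma valid2_append[simp]: "valid2 (A @ B) \<longleftrightarrow> valid2 A \<and> valid2 B" by (auto simp: valid2_def)

lemma W1_lin: "valid1 L \<Longrightarrow> lin smult (W1 L)"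
  by (rule wd_lin) (auto simp: valid1_def intro!: sp_X1)
lemma W2_lin: "valid2 L \<Longrightarrow> lin smult (wd (X2 r) L)"
  by (rule wd_lin) (auto simp: valid2_def intro!: sp_X2)

lemma X1_comm: "1 \<le> k \<Longrightarrow> k < r \<Longrightarrow> 1 \<le> k' \<Longrightarrow> k' < r \<Longrightarrow>
  act (X1 r k) a (act (X1 r k') b v) = act (X1 r k') b (act (X1 r k) a v)"
  using act_comm[OF sp_X1[of k r] sp_X1[of k' r]] br_X1_X1[of k r k'] by (simp add: act_zero_mat)
lemma X2_comm: "1 \<le> k \<Longrightarrow> k \<le> r \<Longrightarrow> 1 \<le> k' \<Longrightarrow> k' \<le> r \<Longrightarrow>
  act (X2 r k) a (act (X2 r k') b v) = act (X2 r k') b (act (X2 r k) a v)"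
  using act_comm[OF sp_X2[of k r] sp_X2[of k' r]] br_X2_X2[of k r k'] by (simp add: act_zero_mat)

lemma xmono_wd: "xmono r act j S v = wd (\<lambda>k. xminus r k j) (concat (map (\<lambda>k. map (Pair k) (S k)) [1..<j+1])) v"
  unfolding xmono_def by (rule foldr_xpow_wd[of "\<lambda>k. xminus r k j"])

lemma xmono_r: "valid2 L \<Longrightarrow> xmono r act r (srt L) v = wd (X2 r) L v"
proof -
  assume v: "valid2 L"
  have e: "(\<lambda>k. xminus r k r) = X2 r" by (simp add: fun_eq_iff xminus_X2)
  have "xmono r act r (srt L) v = wd (X2 r) (concat (map (\<lambda>k. map (Pair k) (srt L k)) [1..<r+1])) v"
    by (simp add: xmono_wd e)
  also have "\<dots> = wd (X2 r) L v"
  proof (rule wd_perm)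
    show "mset (concat (map (\<lambda>k. map (Pair k) (srt L k)) [1..<r + 1])) = mset L"
      by (rule mset_flat) (use v in \<open>auto simp: valid2_def\<close>)
    fix p q v
    assume "p \<in> set (concat (map (\<lambda>k. map (Pair k) (srt L k)) [1..<r + 1]))"
      "q \<in> set (concat (map (\<lambda>k. map (Pair k) (srt L k)) [1..<r + 1]))"
    then show "act (X2 r (fst p)) (snd p) (act (X2 r (fst q)) (snd q) v) =
          act (X2 r (fst q)) (snd q) (act (X2 r (fst p)) (snd p) v)"
      by (intro X2_comm) auto
  qed
  finally show ?thesis .
qed

lemma xmono_r1: "valid1 L \<Longrightarrow> xmono r act (r - 1) (srt L) v = wd (X1 r) L v"
proof -
  assume v: "valid1 L"
  have e: "(\<lambda>k. xminus r k (r - 1)) = X1 r" by (rule ext) (rule xminus_X1[OF r1])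
  have rr: "r - 1 + 1 = r" using r1 by simp
  have "xmono r act (r - 1) (srt L) v = wd (X1 r) (concat (map (\<lambda>k. map (Pair k) (srt L k)) [1..<r])) v"
    unfolding xmono_wd rr e ..
  also have "\<dots> = wd (X1 r) L v"
  proof (rule wd_perm)
    show "mset (concat (map (\<lambda>k. map (Pair k) (srt L k)) [1..<r])) = mset L"
      by (rule mset_flat) (use v in \<open>auto simp: valid1_def\<close>)
    fix p q v
    assume "p \<in> set (concat (map (\<lambda>k. map (Pair k) (srt L k)) [1..<r]))"
      "q \<in> set (concat (map (\<lambda>k. map (Pair k) (srt L k)) [1..<r]))"
    then show "act (X1 r (fst p)) (snd p) (act (X1 r (fst q)) (snd q) v) =
          act (X1 r (fst q)) (snd q) (act (X1 r (fst p)) (snd p) v)"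
      by (intro X1_comm) auto
  qed
  finally show ?thesis .
qed

lemma gen_mem:
  assumes "valid1 L1" "valid2 L2" "P (shp L1, shp L2)"
  shows "W1 L1 (W2 L2) \<in> gens r act w P"
proof -
  have "W1 L1 (W2 L2) = xmono r act (r - 1) (srt L1) (xmono r act r (srt L2) w)"
    using xmono_r[OF assms(2)] xmono_r1[OF assms(1)] by simp
  moreover have "\<forall>k\<in>{1..r-1}. sorted (srt L1 k)" "\<forall>k\<in>{1..r}. sorted (srt L2 k)"
    by (auto simp: srt_def)
  moreover have "P (shape (srt L1), shape (srt L2))" using assms by (simp add: shape_srt)
  ultimately show ?thesis unfolding gens_def by blast
qed


section \<open>Generated subspaces\<close>

lemma gs_base: "X \<subseteq> gen_sub smult act A X"
  unfolding gen_sub_def by auto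

lemma gs_sub: "V.subspace (gen_sub smult act A X)"
  unfolding gen_sub_def V.subspace_def by auto

lemma gs_closed: "x \<in> A \<Longrightarrow> u \<in> gen_sub smult act A X \<Longrightarrow> act x s u \<in> gen_sub smult act A X"
  unfolding gen_sub_def by auto

lemma gs_min: "X \<subseteq> M \<Longrightarrow> V.subspace M \<Longrightarrow> (\<And>x s u. x \<in> A \<Longrightarrow> u \<in> M \<Longrightarrow> act x s u \<in> M) \<Longrightarrow>
   gen_sub smult act A X \<subseteq> M"
  unfolding gen_sub_def by auto

lemma span_sub: "v \<in> V.span S \<Longrightarrow> (\<And>x. x \<in> S \<Longrightarrow> x \<in> T) \<Longrightarrow> V.subspace T \<Longrightarrow> v \<in> T"
  using V.span_minimal by blast

lemma step:
  assumes "x \<in> sp r" "X \<in> sp r" "V.subspace T"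
    "act X a (act x s v) \<in> T" "act (bracket r x X) (s + a) v \<in> T"
  shows "act x s (act X a v) \<in> T"
proof -
  have "act x s (act X a v) = act X a (act x s v) + act (bracket r x X) (s + a) v"
    by (rule act_comm[OF assms(1,2)])
  then show ?thesis using V.subspace_add[OF assms(3) assms(4) assms(5)] by simp
qed

lemma nplus_kill: "x \<in> nplus r \<Longrightarrow> act x s w = 0"
  using wv unfolding weyl_vec_def by blast

section \<open>Action on S-words\<close>

definition im :: "(nat \<times> nat) list \<Rightarrow> nat multiset" where "im L = mset (map fst L)"
lemma im_Cons[simp]: "im ((k, a) # L) = add_mset k (im L)" by (simp add: im_def)
lemma im_Nil[simp]: "im [] = {#}" by (simp add: im_def)
lemma im_append[simp]: "im (A @ B) = im A + im B" by (simp add: im_def)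
lemma cnt_im: "cnt L = count (im L)" by (simp add: cnt_def im_def fun_eq_iff)
lemma dsum_Cons[simp]: "dsum ((k, a) # L) q = (if q = k then a else 0) + dsum L q"
  by (simp add: dsum_def)
lemma dsum_Nil[simp]: "dsum [] q = 0" by (simp add: dsum_def)
lemma dsum_append: "dsum (A @ B) q = dsum A q + dsum B q" by (simp add: dsum_def)

lemma lgt_add: "lgt n (count M') (count M) \<Longrightarrow> lgt n (count (add_mset k M')) (count (add_mset k M))"
proof -
  assume "lgt n (count M') (count M)"
  then obtain s where s: "s \<in> {1..n}" "\<forall>q\<in>{1..<s}. count M' q = count M q" "count M' s < count M s"
    unfolding lgt_def by blast
  show ?thesis unfolding lgt_def
    by (rule bexI[OF _ s(1)]) (use s in auto)
qed

lemma SQ: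
  assumes "1 \<le> c" "c < r" "valid2 L"
  shows "act (QQ r c) s (W2 L) \<in> V.span {W2 L' | L'. valid2 L' \<and> add_mset c (im L') = add_mset r (im L)}"
  using assms(3)
proof (induction L arbitrary: s)
  case Nil
  have "QQ r c \<in> nplus r" using assms r1 QQ_eq[OF r1, of c] xp_ij_nplus[of c "r - 1" r] by auto
  then show ?case using nplus_kill V.span_zero by simp
next
  case (Cons p L)
  obtain k a where p: "p = (k, a)" by force
  have k: "1 \<le> k" "k \<le> r" and vL: "valid2 L" using Cons.prems p by auto
  show ?case unfolding p wd_Cons
  proof (rule step[OF sp_QQ[OF assms(1,2)] sp_X2[OF k] V.subspace_span])
    show "act (X2 r k) a (act (QQ r c) s (W2 L))
      \<in> V.span {W2 L' |L'. valid2 L' \<and> add_mset c (im L') = add_mset r (im ((k, a) # L))}"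
    proof (rule lin_span_sub[OF act_lin[OF sp_X2[OF k]] V.subspace_span _ Cons.IH[OF vL]])
      fix x assume "x \<in> {W2 L' |L'. valid2 L' \<and> add_mset c (im L') = add_mset r (im L)}"
      then obtain L' where "x = W2 L'" "valid2 L'" "add_mset c (im L') = add_mset r (im L)" by blast
      then show "act (X2 r k) a x \<in> V.span {W2 L' |L'. valid2 L' \<and> add_mset c (im L') = add_mset r (im ((k, a) # L))}"
        using k by (intro V.span_base) (auto intro!: exI[of _ "(k, a) # L'"])
    qed
    show "act (bracket r (QQ r c) (X2 r k)) (s + a) (W2 L)
      \<in> V.span {W2 L' |L'. valid2 L' \<and> add_mset c (im L') = add_mset r (im ((k, a) # L))}"
    proof (cases "k = c")
      case True
      have eq: "act (bracket r (QQ r c) (X2 r k)) (s + a) (W2 L) = smult (-2) (W2 ((r, s + a) # L))"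
        using True assms br_QQ_X2[OF assms(1,2) k] act_msc[OF sp_X2[of r r]] r1 by simp
      have mem: "W2 ((r, s + a) # L) \<in> {W2 L' |L'. valid2 L' \<and> add_mset c (im L') = add_mset r (im ((k, a) # L))}"
        using True vL r1 by (auto intro!: exI[of _ "(r, s + a) # L"])
      show ?thesis unfolding eq by (rule V.span_scale[OF V.span_base[OF mem]])
    next
      case False
      then have "bracket r (QQ r c) (X2 r k) = 0" using br_QQ_X2[OF assms(1,2) k] by simp
      then show ?thesis using act_zero_mat V.span_zero by simp
    qed
  qed
qed


lemma Sword_induct:
  assumes x: "x \<in> sp r"
    and sub: "\<And>L. V.subspace (T L)"
    and base: "\<And>s. act x s w \<in> T []"
    and pre: "\<And>L k a v. 1 \<le> k \<Longrightarrow> k \<le> r \<Longrightarrow> valid2 L \<Longrightarrow> v \<in> T L \<Longrightarrow> act (X2 r k) a v \<in> T ((k, a) # L)"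
    and brk: "\<And>L k a s. 1 \<le> k \<Longrightarrow> k \<le> r \<Longrightarrow> valid2 L \<Longrightarrow>
                 act (bracket r x (X2 r k)) (s + a) (W2 L) \<in> T ((k, a) # L)"
    and v: "valid2 L"
  shows "act x s (W2 L) \<in> T L"
  using v
proof (induction L arbitrary: s)
  case Nil
  then show ?case using base by simp
next
  case (Cons p L)
  obtain k a where p: "p = (k, a)" by force
  have k: "1 \<le> k" "k \<le> r" and vL: "valid2 L" using Cons.prems p by auto
  show ?case unfolding p wd_Cons
    by (rule step[OF x sp_X2[OF k] sub pre[OF k vL Cons.IH[OF vL]] brk[OF k vL]])
qed

lemma span_gen: "x \<in> S \<Longrightarrow> x \<in> V.span S" by (rule V.span_base)
lemma span_gen_scale: "x \<in> S \<Longrightarrow> smult c x \<in> V.span S" by (rule V.span_scale[OF V.span_base])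

lemma SH:
  assumes H: "H \<in> sp r" "H \<in> cartan r"
    and br: "\<And>k. 1 \<le> k \<Longrightarrow> k \<le> r \<Longrightarrow> \<exists>c. bracket r H (X2 r k) = msc c (X2 r k)"
    and v: "valid2 L"
  shows "act H s (W2 L) \<in> V.span {W2 L' | L'. valid2 L' \<and> im L' = im L \<and> (\<forall>q. dsum L q \<le> dsum L' q)}"
proof (rule Sword_induct[OF H(1) V.subspace_span _ _ _ v])
  fix s
  have "act H s w = (if s = 0 then smult (wt r m H) w else 0)" using wv H(2) unfolding weyl_vec_def by blast
  moreover have "w \<in> {W2 L' | L'. valid2 L' \<and> im L' = im [] \<and> (\<forall>q. dsum [] q \<le> dsum L' q)}"
    by (auto intro!: exI[of _ "[]"])
  ultimately show "act H s w \<in> V.span {W2 L' | L'. valid2 L' \<and> im L' = im [] \<and> (\<forall>q. dsum [] q \<le> dsum L' q)}"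
    using span_gen_scale V.span_zero by auto
next
  fix L k a v
  assume k: "1 \<le> k" "k \<le> r" and vL: "valid2 L"
    and vin: "v \<in> V.span {W2 L' | L'. valid2 L' \<and> im L' = im L \<and> (\<forall>q. dsum L q \<le> dsum L' q)}"
  show "act (X2 r k) a v \<in> V.span {W2 L' | L'. valid2 L' \<and> im L' = im ((k, a) # L) \<and> (\<forall>q. dsum ((k, a) # L) q \<le> dsum L' q)}"
  proof (rule lin_span_sub[OF act_lin[OF sp_X2[OF k]] V.subspace_span _ vin])
    fix x assume "x \<in> {W2 L' | L'. valid2 L' \<and> im L' = im L \<and> (\<forall>q. dsum L q \<le> dsum L' q)}"
    then obtain L' where L': "x = W2 L'" "valid2 L'" "im L' = im L" "\<forall>q. dsum L q \<le> dsum L' q" by blast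
    show "act (X2 r k) a x \<in> V.span {W2 L' | L'. valid2 L' \<and> im L' = im ((k, a) # L) \<and> (\<forall>q. dsum ((k, a) # L) q \<le> dsum L' q)}"
      apply (rule span_gen)
      using L' k by (auto intro!: exI[of _ "(k, a) # L'"] add_left_mono)
  qed
next
  fix L k a s
  assume k: "1 \<le> k" "k \<le> r" and vL: "valid2 L"
  obtain c where c: "bracket r H (X2 r k) = msc c (X2 r k)" using br[OF k] by blast
  have eq: "act (bracket r H (X2 r k)) (s + a) (W2 L) = smult c (W2 ((k, s + a) # L))"
    using c act_msc[OF sp_X2[OF k]] by simp
  have mem: "W2 ((k, s + a) # L) \<in> {W2 L' | L'. valid2 L' \<and> im L' = im ((k, a) # L) \<and> (\<forall>q. dsum ((k, a) # L) q \<le> dsum L' q)}"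
    using k vL by (auto intro!: exI[of _ "(k, s + a) # L"])
  show "act (bracket r H (X2 r k)) (s + a) (W2 L) \<in> V.span {W2 L' | L'. valid2 L' \<and> im L' = im ((k, a) # L) \<and> (\<forall>q. dsum ((k, a) # L) q \<le> dsum L' q)}"
    unfolding eq by (rule span_gen_scale[OF mem])
qed

lemma SX:
  assumes ab: "1 \<le> a" "a \<le> b" "b + 1 < r" and v: "valid2 L"
  shows "act (xp_ij a b) s (W2 L) \<in> V.span {W2 L' | L'. valid2 L' \<and> add_mset a (im L') = add_mset (b + 1) (im L)}"
proof (rule Sword_induct[OF sp_xp_ij V.subspace_span _ _ _ v])
  show "1 \<le> a" "a \<le> b" "b < r" using ab by auto
  fix s
  have "xp_ij a b \<in> nplus r" using ab by (intro xp_ij_nplus) auto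
  then show "act (xp_ij a b) s w \<in> V.span {W2 L' | L'. valid2 L' \<and> add_mset a (im L') = add_mset (b + 1) (im [])}"
    using nplus_kill V.span_zero by simp
next
  fix L k a' v
  assume k: "1 \<le> k" "k \<le> r" and vL: "valid2 L"
    and vin: "v \<in> V.span {W2 L' | L'. valid2 L' \<and> add_mset a (im L') = add_mset (b + 1) (im L)}"
  show "act (X2 r k) a' v \<in> V.span {W2 L' | L'. valid2 L' \<and> add_mset a (im L') = add_mset (b + 1) (im ((k, a') # L))}"
  proof (rule lin_span_sub[OF act_lin[OF sp_X2[OF k]] V.subspace_span _ vin])
    fix x assume "x \<in> {W2 L' | L'. valid2 L' \<and> add_mset a (im L') = add_mset (b + 1) (im L)}"
    then obtain L' where L': "x = W2 L'" "valid2 L'" "add_mset a (im L') = add_mset (b + 1) (im L)" by blast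
    show "act (X2 r k) a' x \<in> V.span {W2 L' | L'. valid2 L' \<and> add_mset a (im L') = add_mset (b + 1) (im ((k, a') # L))}"
      apply (rule span_gen)
      using L' k by (auto intro!: exI[of _ "(k, a') # L'"] simp: add_mset_commute)
  qed
next
  fix L k a' s
  assume k: "1 \<le> k" "k \<le> r" and vL: "valid2 L"
  show "act (bracket r (xp_ij a b) (X2 r k)) (s + a') (W2 L) \<in> V.span {W2 L' | L'. valid2 L' \<and> add_mset a (im L') = add_mset (b + 1) (im ((k, a') # L))}"
  proof (cases "k = a")
    case True
    have eq: "act (bracket r (xp_ij a b) (X2 r k)) (s + a') (W2 L) = smult (-1) (W2 ((b + 1, s + a') # L))"
      using True br_xpij_X2[OF ab k] act_msc[OF sp_X2[of "b + 1" r]] ab by simp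
    have mem: "W2 ((b + 1, s + a') # L) \<in> {W2 L' | L'. valid2 L' \<and> add_mset a (im L') = add_mset (b + 1) (im ((k, a') # L))}"
      using True vL ab by (auto intro!: exI[of _ "(b + 1, s + a') # L"] simp: add_mset_commute)
    show ?thesis unfolding eq by (rule span_gen_scale[OF mem])
  next
    case False
    then have "bracket r (xp_ij a b) (X2 r k) = 0" using br_xpij_X2[OF ab k] by simp
    then show ?thesis using act_zero_mat V.span_zero by simp
  qed
qed

lemma SXB:
  assumes ab: "1 \<le> a" "a \<le> b" "b < r" and v: "valid2 L"
  shows "act (xp_bar a b) s (W2 L) \<in> V.span {W2 L' | L'. valid2 L' \<and> lgt r (cnt L') (cnt L)}"
proof (rule Sword_induct[OF sp_xp_bar V.subspace_span _ _ _ v])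
  show "1 \<le> a" "a \<le> b" "b \<le> r" using ab by auto
  fix s
  have "xp_bar a b \<in> nplus r" using ab by (intro xp_bar_nplus) auto
  then show "act (xp_bar a b) s w \<in> V.span {W2 L' | L'. valid2 L' \<and> lgt r (cnt L') (cnt [])}"
    using nplus_kill V.span_zero by simp
next
  fix L k a' v
  assume k: "1 \<le> k" "k \<le> r" and vL: "valid2 L"
    and vin: "v \<in> V.span {W2 L' | L'. valid2 L' \<and> lgt r (cnt L') (cnt L)}"
  show "act (X2 r k) a' v \<in> V.span {W2 L' | L'. valid2 L' \<and> lgt r (cnt L') (cnt ((k, a') # L))}"
  proof (rule lin_span_sub[OF act_lin[OF sp_X2[OF k]] V.subspace_span _ vin])
    fix x assume "x \<in> {W2 L' | L'. valid2 L' \<and> lgt r (cnt L') (cnt L)}"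
    then obtain L' where L': "x = W2 L'" "valid2 L'" "lgt r (cnt L') (cnt L)" by blast
    show "act (X2 r k) a' x \<in> V.span {W2 L' | L'. valid2 L' \<and> lgt r (cnt L') (cnt ((k, a') # L))}"
      apply (rule span_gen)
      using L' k lgt_add[of r "im L'" "im L" k] by (auto intro!: exI[of _ "(k, a') # L'"] simp: cnt_im)
  qed
next
  fix L k a' s
  assume k: "1 \<le> k" "k \<le> r" and vL: "valid2 L"
  let ?T = "V.span {W2 L' | L'. valid2 L' \<and> lgt r (cnt L') (cnt ((k, a') # L))}"
  have Qcase: "act (QQ r c) (s + a') (W2 L) \<in> ?T" if c: "1 \<le> c" "c < r" "{#c, k#} = {#a, b#}" for c
  proof (rule span_sub[OF SQ[OF c(1,2) vL] _ V.subspace_span])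
    fix x assume "x \<in> {W2 L' |L'. valid2 L' \<and> add_mset c (im L') = add_mset r (im L)}"
    then obtain L' where L': "x = W2 L'" "valid2 L'" "add_mset c (im L') = add_mset r (im L)" by blast
    have "lgt r (count (im L')) (count (im ((k, a') # L)))"
    proof (rule lgt_multiset[of _ "{#a, b#}" _ "{#r#}"])
      show "im L' + {#a, b#} = im ((k, a') # L) + {#r#}"
        using L'(3) c(3) by (metis add_mset_add_single im_Cons add_mset_commute union_mset_add_mset_right add_mset_eq_single)
    qed (use ab in auto)
    then show "x \<in> ?T" using L' by (intro span_gen) (auto simp: cnt_im)
  qed
  show "act (bracket r (xp_bar a b) (X2 r k)) (s + a') (W2 L) \<in> ?T"
  proof (cases "k = a")
    case True
    then show ?thesis using br_xpbar_X2[OF ab k] Qcase[of b] ab by (simp add: add_mset_commute)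
  next
    case False
    show ?thesis
    proof (cases "k = b")
      case True
      then show ?thesis using br_xpbar_X2[OF ab k] Qcase[of a] ab False by simp
    next
      case False2: False
      then have "bracket r (xp_bar a b) (X2 r k) = 0" using br_xpbar_X2[OF ab k] False by simp
      then show ?thesis using act_zero_mat V.span_zero by simp
    qed
  qed
qed


lemma msc_add_same: "msc a X + msc b X = msc (a + b) X"
  by (simp add: msc_def fun_eq_iff algebra_simps)

lemma br_hh_ex: "1 \<le> j \<Longrightarrow> j \<le> r \<Longrightarrow> 1 \<le> k \<Longrightarrow> k \<le> r \<Longrightarrow> \<exists>c. bracket r (hh j) (X2 r k) = msc c (X2 r k)"
  using br_h_X2 by blast

lemma br_Hp_ex: "1 \<le> c \<Longrightarrow> c \<le> r \<Longrightarrow> 1 \<le> k \<Longrightarrow> k \<le> r \<Longrightarrow> \<exists>d. bracket r (Hp r c) (X2 r k) = msc d (X2 r k)"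
proof -
  assume a: "1 \<le> c" "c \<le> r" "1 \<le> k" "k \<le> r"
  obtain d1 where d1: "bracket r (hh c) (X2 r k) = msc d1 (X2 r k)" using br_hh_ex a by blast
  obtain d2 where d2: "bracket r (hh r) (X2 r k) = msc d2 (X2 r k)" using br_hh_ex a r1 by blast
  have "bracket r (Hp r c) (X2 r k) = msc (d1 + d2) (X2 r k)"
    unfolding Hp_def bracket_add_left d1 d2 msc_add_same ..
  then show ?thesis by blast
qed

definition TSg :: "(nat \<times> nat) list \<Rightarrow> 'v set" where
  "TSg L = {W2 L' | L'. valid2 L' \<and> lgt r (cnt L') (cnt L)}
    \<union> {act (xm_bar a b) e (W2 L') | a b e L'. 1 \<le> a \<and> a \<le> b \<and> b < r \<and> valid2 L' \<and> lgt r (cnt L') (cnt L)}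
    \<union> {act (X1 r k) e (W2 L') | k e L'. 1 \<le> k \<and> k < r \<and> valid2 L' \<and> im L = add_mset k (im L')}
    \<union> {act (xm_ij k j) e (W2 L') | k j e L'. 1 \<le> k \<and> k \<le> j \<and> j + 1 < r \<and> valid2 L' \<and> im L = add_mset k (im L')}"

lemma G1I: "valid2 L' \<Longrightarrow> lgt r (cnt L') (cnt L) \<Longrightarrow> W2 L' \<in> V.span (TSg L)"
  by (rule span_gen) (auto simp: TSg_def)
lemma G2I: "1 \<le> a \<Longrightarrow> a \<le> b \<Longrightarrow> b < r \<Longrightarrow> valid2 L' \<Longrightarrow> lgt r (cnt L') (cnt L) \<Longrightarrow>
   act (xm_bar a b) e (W2 L') \<in> V.span (TSg L)"
  by (rule span_gen) (unfold TSg_def, blast)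
lemma G3I: "1 \<le> k \<Longrightarrow> k < r \<Longrightarrow> valid2 L' \<Longrightarrow> im L = add_mset k (im L') \<Longrightarrow>
   act (X1 r k) e (W2 L') \<in> V.span (TSg L)"
  by (rule span_gen) (unfold TSg_def, blast)
lemma G4I: "1 \<le> k \<Longrightarrow> k \<le> j \<Longrightarrow> j + 1 < r \<Longrightarrow> valid2 L' \<Longrightarrow> im L = add_mset k (im L') \<Longrightarrow>
   act (xm_ij k j) e (W2 L') \<in> V.span (TSg L)"
  by (rule span_gen) (unfold TSg_def, blast)

lemma lgt_sub1: "1 \<le> k \<Longrightarrow> k \<le> r \<Longrightarrow> im L = add_mset k (im L') \<Longrightarrow> lgt r (cnt L') (cnt L)"
  unfolding cnt_im by (rule lgt_multiset[of _ "{#k#}" _ "{#}"]) auto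
lemma lgt_sub2: "1 \<le> k \<Longrightarrow> k \<le> r \<Longrightarrow> 1 \<le> k' \<Longrightarrow> k' \<le> r \<Longrightarrow> im L = add_mset k (add_mset k' (im L')) \<Longrightarrow> lgt r (cnt L') (cnt L)"
  unfolding cnt_im by (rule lgt_multiset[of _ "{#k, k'#}" _ "{#}"]) auto

lemma comm0: "x \<in> sp r \<Longrightarrow> y \<in> sp r \<Longrightarrow> bracket r x y = 0 \<Longrightarrow> act x a (act y b v) = act y b (act x a v)"
  using act_comm[of x y a b v] act_zero_mat by simp

lemma prefix_TS:
  assumes k: "1 \<le> k" "k \<le> r" and vL: "valid2 L" and vin: "v \<in> V.span (TSg L)"
  shows "act (X2 r k) a v \<in> V.span (TSg ((k, a) # L))"
proof (rule lin_span_sub[OF act_lin[OF sp_X2[OF k]] V.subspace_span _ vin])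
  fix x assume "x \<in> TSg L"
  then consider
    (g1) L' where "x = W2 L'" "valid2 L'" "lgt r (cnt L') (cnt L)"
  | (g2) a' b e L' where "x = act (xm_bar a' b) e (W2 L')" "1 \<le> a'" "a' \<le> b" "b < r" "valid2 L'" "lgt r (cnt L') (cnt L)"
  | (g3) k' e L' where "x = act (X1 r k') e (W2 L')" "1 \<le> k'" "k' < r" "valid2 L'" "im L = add_mset k' (im L')"
  | (g4) k' j e L' where "x = act (xm_ij k' j) e (W2 L')" "1 \<le> k'" "k' \<le> j" "j + 1 < r" "valid2 L'" "im L = add_mset k' (im L')"
    unfolding TSg_def by blast
  then show "act (X2 r k) a x \<in> V.span (TSg ((k, a) # L))"
  proof cases
    case g1
    have "lgt r (cnt ((k, a) # L')) (cnt ((k, a) # L))"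
      using g1 lgt_add[of r "im L'" "im L" k] by (simp add: cnt_im)
    then show ?thesis using g1 k G1I[of "(k, a) # L'" "(k, a) # L"] by simp
  next
    case g2
    have "act (X2 r k) a x = act (xm_bar a' b) e (W2 ((k, a) # L'))"
      using g2 k by (simp add: comm0[OF sp_X2 sp_xm_bar] br_X2_xmbar)
    then show ?thesis using g2 k lgt_add[of r "im L'" "im L" k]
      by (simp only:) (intro G2I, auto simp: cnt_im)
  next
    case g3
    have eq: "act (X2 r k) a x = act (X1 r k') e (W2 ((k, a) # L')) + act (bracket r (X2 r k) (X1 r k')) (a + e) (W2 L')"
      using g3 act_comm[OF sp_X2[OF k] sp_X1[OF g3(2,3)]] by simp
    have m1: "act (X1 r k') e (W2 ((k, a) # L')) \<in> V.span (TSg ((k, a) # L))"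
      using g3 k by (intro G3I) (auto simp: add_mset_commute)
    have m2: "act (bracket r (X2 r k) (X1 r k')) (a + e) (W2 L') \<in> V.span (TSg ((k, a) # L))"
    proof (cases "k = r")
      case True
      have "act (bracket r (X2 r k) (X1 r k')) (a + e) (W2 L') = W2 ((k', a + e) # L')"
        using True br_X2_X1[OF g3(2,3) k] by simp
      moreover have "lgt r (cnt ((k', a + e) # L')) (cnt ((k, a) # L))"
        using True g3 k by (intro lgt_sub1) auto
      ultimately show ?thesis using g3 by (simp only:) (intro G1I, auto)
    next
      case False
      have lg: "lgt r (cnt L') (cnt ((k, a) # L))" using g3 k by (intro lgt_sub2[of k k']) auto
      show ?thesis
      proof (cases "k = k'")
        case True
        have "act (bracket r (X2 r k) (X1 r k')) (a + e) (W2 L') = smult 2 (act (xm_bar k k) (a + e) (W2 L'))"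
          using True False br_X2_X1[OF g3(2,3) k] act_msc[OF sp_xm_bar[of k k r]] k by simp
        then show ?thesis using G2I[of k k L' "(k, a) # L" "a + e"] k g3 lg False V.span_scale by auto
      next
        case False2: False
        have "act (bracket r (X2 r k) (X1 r k')) (a + e) (W2 L') = act (xm_bar (min k' k) (max k' k)) (a + e) (W2 L')"
          using False2 False br_X2_X1[OF g3(2,3) k] by simp
        then show ?thesis using G2I[of "min k' k" "max k' k" L' "(k, a) # L" "a + e"] k g3 lg False
          by (simp add: min_def max_def)
      qed
    qed
    show ?thesis unfolding eq by (rule V.span_add[OF m1 m2])
  next
    case g4
    have eq: "act (X2 r k) a x = act (xm_ij k' j) e (W2 ((k, a) # L')) + act (bracket r (X2 r k) (xm_ij k' j)) (a + e) (W2 L')"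
      using g4 act_comm[OF sp_X2[OF k] sp_xm_ij[of k' j r]] by simp
    have m1: "act (xm_ij k' j) e (W2 ((k, a) # L')) \<in> V.span (TSg ((k, a) # L))"
      using g4 k by (intro G4I) (auto simp: add_mset_commute)
    have m2: "act (bracket r (X2 r k) (xm_ij k' j)) (a + e) (W2 L') \<in> V.span (TSg ((k, a) # L))"
    proof (cases "k = j + 1")
      case True
      have "act (bracket r (X2 r k) (xm_ij k' j)) (a + e) (W2 L') = W2 ((k', a + e) # L')"
        using True br_X2_xmij[OF g4(2,3,4) k] by simp
      moreover have "lgt r (cnt ((k', a + e) # L')) (cnt ((k, a) # L))"
        using True g4 k by (intro lgt_sub1) auto
      ultimately show ?thesis using g4 by (simp only:) (intro G1I, auto)
    next
      case False
      then show ?thesis using br_X2_xmij[OF g4(2,3,4) k] act_zero_mat V.span_zero by simp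
    qed
    show ?thesis unfolding eq by (rule V.span_add[OF m1 m2])
  qed
qed


lemma SH_TS:
  assumes H: "H \<in> sp r" "H \<in> cartan r"
    and br: "\<And>k. 1 \<le> k \<Longrightarrow> k \<le> r \<Longrightarrow> \<exists>c. bracket r H (X2 r k) = msc c (X2 r k)"
    and v: "valid2 L" and k: "1 \<le> k" "k \<le> r"
  shows "act H s (W2 L) \<in> V.span (TSg ((k, a) # L))"
proof (rule span_sub[OF SH[OF H br v] _ V.subspace_span])
  fix x assume "x \<in> {W2 L' | L'. valid2 L' \<and> im L' = im L \<and> (\<forall>q. dsum L q \<le> dsum L' q)}"
  then obtain L' where L': "x = W2 L'" "valid2 L'" "im L' = im L" by blast
  have "lgt r (cnt L') (cnt ((k, a) # L))" using L' k by (intro lgt_sub1) auto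
  then show "x \<in> V.span (TSg ((k, a) # L))" using L' by (simp add: G1I)
qed

lemma SP:
  assumes c: "1 \<le> c" "c < r" and v: "valid2 L"
  shows "act (PP r c) s (W2 L) \<in> V.span (TSg L)"
proof (rule Sword_induct[OF sp_PP[OF c] V.subspace_span _ _ _ v])
  fix s
  have "PP r c \<in> nplus r" using c PP_eq[OF c(2)] xp_bar_nplus[of c r r] by simp
  then show "act (PP r c) s w \<in> V.span (TSg [])" using nplus_kill V.span_zero by simp
next
  fix L k a v
  assume "1 \<le> k" "k \<le> r" "valid2 L" "v \<in> V.span (TSg L)"
  then show "act (X2 r k) a v \<in> V.span (TSg ((k, a) # L))" by (rule prefix_TS)
next
  fix L k a s
  assume k: "1 \<le> k" "k \<le> r" and vL: "valid2 L"
  show "act (bracket r (PP r c) (X2 r k)) (s + a) (W2 L) \<in> V.span (TSg ((k, a) # L))"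
  proof (cases "k = c")
    case True
    then have "bracket r (PP r c) (X2 r k) = Hp r c" using br_PP_X2[OF c k] by simp
    moreover have br': "\<And>k. 1 \<le> k \<Longrightarrow> k \<le> r \<Longrightarrow> \<exists>d. bracket r (Hp r c) (X2 r k) = msc d (X2 r k)"
      using br_Hp_ex c by auto
    moreover have "act (Hp r c) (s + a) (W2 L) \<in> V.span (TSg ((k, a) # L))"
      by (rule SH_TS[OF sp_Hp Hp_cartan br' vL k]) (use c in auto)
    ultimately show ?thesis by simp
  next
    case F1: False
    show ?thesis
    proof (cases "k < c")
      case True
      then have "bracket r (PP r c) (X2 r k) = xm_ij k (c - 1)" using br_PP_X2[OF c k] F1 by simp
      then show ?thesis using True k c vL by (simp only:) (intro G4I, auto)
    next
      case F2: False
      show ?thesis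
      proof (cases "k < r")
        case True
        then have eq: "bracket r (PP r c) (X2 r k) = xp_ij c (k - 1)" using br_PP_X2[OF c k] F1 F2 by simp
        have ck: "1 \<le> c" "c \<le> k - 1" "k - 1 + 1 < r" using c F1 F2 True by auto
        show ?thesis unfolding eq
        proof (rule span_sub[OF SX[OF ck vL] _ V.subspace_span])
          fix x assume "x \<in> {W2 L' | L'. valid2 L' \<and> add_mset c (im L') = add_mset (k - 1 + 1) (im L)}"
          then obtain L' where L': "x = W2 L'" "valid2 L'" "add_mset c (im L') = add_mset (k - 1 + 1) (im L)" by blast
          have "lgt r (cnt L') (cnt ((k, a) # L))"
            unfolding cnt_im by (rule lgt_multiset[of _ "{#c#}" _ "{#}"]) (use L' c k in auto)
          then show "x \<in> V.span (TSg ((k, a) # L))" using L' by (simp add: G1I)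
        qed
      next
        case False
        then have kr: "k = r" using k by simp
        then have eq: "bracket r (PP r c) (X2 r k) = QQ r c" using br_PP_X2[OF c k] F1 F2 by simp
        show ?thesis unfolding eq
        proof (rule span_sub[OF SQ[OF c vL] _ V.subspace_span])
          fix x assume "x \<in> {W2 L' | L'. valid2 L' \<and> add_mset c (im L') = add_mset r (im L)}"
          then obtain L' where L': "x = W2 L'" "valid2 L'" "add_mset c (im L') = add_mset r (im L)" by blast
          have "lgt r (cnt L') (cnt ((k, a) # L))"
            unfolding cnt_im by (rule lgt_multiset[of _ "{#c#}" _ "{#}"]) (use L' c kr in auto)
          then show "x \<in> V.span (TSg ((k, a) # L))" using L' by (simp add: G1I)
        qed
      qed
    qed
  qed
qed

lemma SR:
  assumes v: "valid2 L"
  shows "act (RR r) s (W2 L) \<in> V.span (TSg L)"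
proof (rule Sword_induct[OF sp_RR[OF r1] V.subspace_span _ _ _ v])
  fix s
  have "RR r \<in> nplus r" using r1 RR_eq xp_bar_nplus[of r r r] by simp
  then show "act (RR r) s w \<in> V.span (TSg [])" using nplus_kill V.span_zero by simp
next
  fix L k a v
  assume "1 \<le> k" "k \<le> r" "valid2 L" "v \<in> V.span (TSg L)"
  then show "act (X2 r k) a v \<in> V.span (TSg ((k, a) # L))" by (rule prefix_TS)
next
  fix L k a s
  assume k: "1 \<le> k" "k \<le> r" and vL: "valid2 L"
  show "act (bracket r (RR r) (X2 r k)) (s + a) (W2 L) \<in> V.span (TSg ((k, a) # L))"
  proof (cases "k = r")
    case True
    then have "bracket r (RR r) (X2 r k) = hh r" using br_RR_X2[OF k] by simp
    moreover have br': "\<And>k. 1 \<le> k \<Longrightarrow> k \<le> r \<Longrightarrow> \<exists>d. bracket r (hh r) (X2 r k) = msc d (X2 r k)"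
      using br_hh_ex r1 by auto
    moreover have "act (hh r) (s + a) (W2 L) \<in> V.span (TSg ((k, a) # L))"
      by (rule SH_TS[OF sp_hh hh_cartan br' vL k]) (use r1 in auto)
    ultimately show ?thesis by simp
  next
    case False
    then have "bracket r (RR r) (X2 r k) = X1 r k" using br_RR_X2[OF k] by simp
    then show ?thesis using False k vL by (simp only:) (intro G3I, auto)
  qed
qed


section \<open>The S'-level\<close>

abbreviation NN where "NN P \<equiv> gen_sub smult act (nminus_red r) (gens r act w P)"

lemma gen_in_N: "valid1 A \<Longrightarrow> valid2 L \<Longrightarrow> P (shp A, shp L) \<Longrightarrow> W1 A (W2 L) \<in> NN P"
  using gen_mem gs_base by blast

lemma N_close: "y \<in> nminus_red r \<Longrightarrow> u \<in> NN P \<Longrightarrow> act y e u \<in> NN P"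
  by (rule gs_closed)

lemma P_big: "upc r P \<Longrightarrow> P (q, shp L) \<Longrightarrow> lgt r (cnt L') (cnt L) \<Longrightarrow> P (q', shp L')"
  unfolding upc_def IIge_def IIgt_def Igt_def by (metis fst_conv shp_def snd_conv)

lemma move_y:
  assumes y: "1 \<le> k" "k \<le> j" "j + 1 < r" and vA: "valid1 A"
  shows "W1 A (act (xm_ij k j) e u) - act (xm_ij k j) e (W1 A u) \<in> V.span {W1 A' u | A'. valid1 A'}"
  using vA
proof (induction A)
  case Nil
  then show ?case using V.span_zero by simp
next
  case (Cons p A)
  obtain k' a where p: "p = (k', a)" by force
  have k': "1 \<le> k'" "k' < r" and vA: "valid1 A" using Cons.prems p by auto
  define z where "z = W1 A (act (xm_ij k j) e u) - act (xm_ij k j) e (W1 A u)"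
  have z: "z \<in> V.span {W1 A' u | A'. valid1 A'}" using Cons.IH[OF vA] z_def by simp
  have spy: "xm_ij k j \<in> sp r" using y by (intro sp_xm_ij) auto
  have "W1 (p # A) (act (xm_ij k j) e u) = act (X1 r k') a (act (xm_ij k j) e (W1 A u) + z)"
    using p z_def by simp
  also have "\<dots> = act (xm_ij k j) e (act (X1 r k') a (W1 A u)) + act (bracket r (X1 r k') (xm_ij k j)) (a + e) (W1 A u)
      + act (X1 r k') a z"
    using lin_add[OF act_lin[OF sp_X1[OF k']]] act_comm[OF sp_X1[OF k'] spy] by simp
  finally have eq: "W1 (p # A) (act (xm_ij k j) e u) - act (xm_ij k j) e (W1 (p # A) u) =
     act (bracket r (X1 r k') (xm_ij k j)) (a + e) (W1 A u) + act (X1 r k') a z"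
    using p by (simp add: algebra_simps)
  have m1: "act (bracket r (X1 r k') (xm_ij k j)) (a + e) (W1 A u) \<in> V.span {W1 A' u | A'. valid1 A'}"
  proof (cases "k' = j + 1")
    case True
    then have "act (bracket r (X1 r k') (xm_ij k j)) (a + e) (W1 A u) = W1 ((k, a + e) # A) u"
      using br_X1_xmij[OF y k'] by simp
    moreover have "W1 ((k, a + e) # A) u \<in> {W1 A' u | A'. valid1 A'}" using y vA by (auto intro!: exI[of _ "(k, a + e) # A"])
    ultimately show ?thesis using span_gen by simp
  next
    case False
    then show ?thesis using br_X1_xmij[OF y k'] act_zero_mat V.span_zero by simp
  qed
  have m2: "act (X1 r k') a z \<in> V.span {W1 A' u | A'. valid1 A'}"
  proof (rule lin_span_sub[OF act_lin[OF sp_X1[OF k']] V.subspace_span _ z])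
    fix x assume "x \<in> {W1 A' u | A'. valid1 A'}"
    then obtain A' where "x = W1 A' u" "valid1 A'" by blast
    then show "act (X1 r k') a x \<in> V.span {W1 A' u | A'. valid1 A'}"
      using k' by (intro span_gen) (auto intro!: exI[of _ "(k', a) # A'"])
  qed
  show ?case unfolding eq by (rule V.span_add[OF m1 m2])
qed

lemma br_X1_RR: "1 \<le> k \<Longrightarrow> k < r \<Longrightarrow> bracket r (X1 r k) (RR r) = 0"
  using br_RR_X1[of k r] unfolding bracket_def by (metis diff_self eq_iff_diff_eq_0)

lemma RR_W1: "valid1 A \<Longrightarrow> act (RR r) e (W1 A u) = W1 A (act (RR r) e u)"
  by (rule wd_comm_letter[symmetric]) (auto simp: valid1_def intro!: comm0 sp_X1 sp_RR r1 br_X1_RR)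

lemma move_P:
  assumes c: "1 \<le> c" "c < r" and vA: "valid1 A"
  shows "act (PP r c) e (W1 A u) - W1 A (act (PP r c) e u) \<in> V.span {W1 A' (act (RR r) e' u) | A' e'. valid1 A'}"
  using vA
proof (induction A arbitrary: e)
  case Nil
  then show ?case using V.span_zero by simp
next
  case (Cons p A)
  obtain k a where p: "p = (k, a)" by force
  have k: "1 \<le> k" "k < r" and vA: "valid1 A" using Cons.prems p by auto
  define z where "z = act (PP r c) e (W1 A u) - W1 A (act (PP r c) e u)"
  have z: "z \<in> V.span {W1 A' (act (RR r) e' u) | A' e'. valid1 A'}" using Cons.IH[OF vA] z_def by simp
  have "act (PP r c) e (W1 (p # A) u) = act (X1 r k) a (W1 A (act (PP r c) e u) + z) + act (bracket r (PP r c) (X1 r k)) (e + a) (W1 A u)"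
    using p z_def act_comm[OF sp_PP[OF c] sp_X1[OF k]] by simp
  then have eq: "act (PP r c) e (W1 (p # A) u) - W1 (p # A) (act (PP r c) e u) =
      act (X1 r k) a z + act (bracket r (PP r c) (X1 r k)) (e + a) (W1 A u)"
    using p lin_add[OF act_lin[OF sp_X1[OF k]]] by (simp add: algebra_simps)
  have m1: "act (X1 r k) a z \<in> V.span {W1 A' (act (RR r) e' u) | A' e'. valid1 A'}"
  proof (rule lin_span_sub[OF act_lin[OF sp_X1[OF k]] V.subspace_span _ z])
    fix x assume "x \<in> {W1 A' (act (RR r) e' u) | A' e'. valid1 A'}"
    then obtain A' e' where "x = W1 A' (act (RR r) e' u)" "valid1 A'" by blast
    then show "act (X1 r k) a x \<in> V.span {W1 A' (act (RR r) e' u) | A' e'. valid1 A'}"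
      using k by (intro span_gen) (auto intro!: exI[of _ "(k, a) # A'"])
  qed
  have m2: "act (bracket r (PP r c) (X1 r k)) (e + a) (W1 A u) \<in> V.span {W1 A' (act (RR r) e' u) | A' e'. valid1 A'}"
  proof (cases "k = c")
    case True
    then have "act (bracket r (PP r c) (X1 r k)) (e + a) (W1 A u) = smult (-2) (W1 A (act (RR r) (e + a) u))"
      using br_PP_X1[OF c k] act_msc[OF sp_RR[OF r1]] RR_W1[OF vA] by simp
    moreover have mem: "W1 A (act (RR r) (e + a) u) \<in> {W1 A' (act (RR r) e' u) | A' e'. valid1 A'}" using vA by blast
    ultimately show ?thesis using span_gen_scale[OF mem, of "-2"] by metis
  next
    case False
    then show ?thesis using br_PP_X1[OF c k] act_zero_mat V.span_zero by simp
  qed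
  show ?case unfolding eq by (rule V.span_add[OF m1 m2])
qed

lemma TSN:
  assumes P: "upc r P" "P (q, shp L)" and vA: "valid1 A" and vin: "v \<in> V.span (TSg L)"
  shows "W1 A v \<in> NN P"
proof (rule lin_span_sub[OF W1_lin[OF vA] gs_sub _ vin])
  fix x assume "x \<in> TSg L"
  then consider
    (g1) L' where "x = W2 L'" "valid2 L'" "lgt r (cnt L') (cnt L)"
  | (g2) a' b e L' where "x = act (xm_bar a' b) e (W2 L')" "1 \<le> a'" "a' \<le> b" "b < r" "valid2 L'" "lgt r (cnt L') (cnt L)"
  | (g3) k' e L' where "x = act (X1 r k') e (W2 L')" "1 \<le> k'" "k' < r" "valid2 L'" "im L = add_mset k' (im L')"
  | (g4) k' j e L' where "x = act (xm_ij k' j) e (W2 L')" "1 \<le> k'" "k' \<le> j" "j + 1 < r" "valid2 L'" "im L = add_mset k' (im L')"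
    unfolding TSg_def by blast
  then show "W1 A x \<in> NN P"
  proof cases
    case g1
    then show ?thesis using gen_in_N[OF vA] P_big[OF P] by simp
  next
    case g2
    have "W1 A x = act (xm_bar a' b) e (W1 A (W2 L'))"
      unfolding g2(1)
      by (rule wd_comm_letter) (use vA g2 in \<open>auto simp: valid1_def intro!: comm0 sp_X1 sp_xm_bar br_X1_xmbar\<close>)
    moreover have "xm_bar a' b \<in> nminus_red r" using g2 by (intro xm_bar_nminus) auto
    moreover have "W1 A (W2 L') \<in> NN P" using g2 gen_in_N[OF vA] P_big[OF P] by simp
    ultimately show ?thesis using N_close by simp
  next
    case g3
    have "W1 A x = W1 (A @ [(k', e)]) (W2 L')" using g3 by (simp add: wd_append)
    moreover have "lgt r (cnt L') (cnt L)" using g3 r1 by (intro lgt_sub1[of k']) auto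
    ultimately show ?thesis using g3 vA gen_in_N P_big[OF P] by simp
  next
    case g4
    have lg: "lgt r (cnt L') (cnt L)" using g4 by (intro lgt_sub1[of k']) auto
    have d: "W1 A (act (xm_ij k' j) e (W2 L')) - act (xm_ij k' j) e (W1 A (W2 L')) \<in> NN P"
    proof (rule span_sub[OF move_y[OF g4(2,3,4) vA] _ gs_sub])
      fix y assume "y \<in> {W1 A' (W2 L') | A'. valid1 A'}"
      then show "y \<in> NN P" using gen_in_N g4 lg P_big[OF P] by blast
    qed
    have "act (xm_ij k' j) e (W1 A (W2 L')) \<in> NN P"
      using g4 lg gen_in_N[OF vA] P_big[OF P] xm_ij_nminus[of k' j r] N_close by simp
    then have "act (xm_ij k' j) e (W1 A (W2 L')) + (W1 A (act (xm_ij k' j) e (W2 L')) - act (xm_ij k' j) e (W1 A (W2 L'))) \<in> NN P"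
      using d gs_sub V.subspace_add by blast
    then show ?thesis using g4 by simp
  qed
qed


lemma leib:
  assumes x: "x \<in> sp r" and vA: "valid1 A"
  shows "act x s (W1 A u) - W1 A (act x s u) \<in>
    V.span {W1 A1 (act (bracket r x (X1 r k)) (s + a) (W1 A2 u)) | A1 k a A2. A = A1 @ (k, a) # A2}"
  using vA
proof (induction A)
  case Nil
  then show ?case using V.span_zero by simp
next
  case (Cons p A)
  obtain k a where p: "p = (k, a)" by force
  have k: "1 \<le> k" "k < r" and vA: "valid1 A" using Cons.prems p by auto
  define z where "z = act x s (W1 A u) - W1 A (act x s u)"
  have z: "z \<in> V.span {W1 A1 (act (bracket r x (X1 r k)) (s + a) (W1 A2 u)) | A1 k a A2. A = A1 @ (k, a) # A2}"
    using Cons.IH[OF vA] z_def by simp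
  have "act x s (W1 (p # A) u) = act (X1 r k) a (W1 A (act x s u) + z) + act (bracket r x (X1 r k)) (s + a) (W1 A u)"
    using p z_def act_comm[OF x sp_X1[OF k]] by simp
  then have eq: "act x s (W1 (p # A) u) - W1 (p # A) (act x s u) =
      act (X1 r k) a z + act (bracket r x (X1 r k)) (s + a) (W1 A u)"
    using p lin_add[OF act_lin[OF sp_X1[OF k]]] by (simp add: algebra_simps)
  let ?S = "{W1 A1 (act (bracket r x (X1 r k)) (s + a) (W1 A2 u)) | A1 k a A2. p # A = A1 @ (k, a) # A2}"
  have m1: "act (X1 r k) a z \<in> V.span ?S"
  proof (rule lin_span_sub[OF act_lin[OF sp_X1[OF k]] V.subspace_span _ z])
    fix y assume "y \<in> {W1 A1 (act (bracket r x (X1 r k)) (s + a) (W1 A2 u)) | A1 k a A2. A = A1 @ (k, a) # A2}"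
    then obtain A1 k' a' A2 where "y = W1 A1 (act (bracket r x (X1 r k')) (s + a') (W1 A2 u))" "A = A1 @ (k', a') # A2" by blast
    then show "act (X1 r k) a y \<in> V.span ?S"
      using p by (intro span_gen) (auto intro!: exI[of _ "(k, a) # A1"])
  qed
  have m2: "act (bracket r x (X1 r k)) (s + a) (W1 A u) \<in> V.span ?S"
    using p by (intro span_gen) (auto intro!: exI[of _ "[]"])
  show ?case unfolding eq by (rule V.span_add[OF m1 m2])
qed

lemma cnt_append: "cnt (A @ B) = (\<lambda>q. cnt A q + cnt B q)"
  by (simp add: cnt_im fun_eq_iff)

definition Bplus :: "mat set" where
  "Bplus = {hh j | j. 1 \<le> j \<and> j < r} \<union> {xp_ij a b | a b. 1 \<le> a \<and> a \<le> b \<and> b + 1 < r}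
         \<union> {xp_bar a b | a b. 1 \<le> a \<and> a \<le> b \<and> b < r}"

lemma Bplus_sp: "x \<in> Bplus \<Longrightarrow> x \<in> sp r"
  unfolding Bplus_def by (auto intro!: sp_hh sp_xp_ij sp_xp_bar)

lemma IIge_ofI: "Ieq r a b \<Longrightarrow> (Igt (r - 1) a' b' \<or> Ieq (r - 1) a' b') \<Longrightarrow> IIge r (a', a) (b', b)"
  unfolding IIge_def IIgt_def IIeq_def by auto

lemma Ieq_refl: "Ieq n a a" unfolding Ieq_def by (simp add: eqon_refl)

lemma IIge_sndI: "Igt r a b \<or> Ieq r a b \<Longrightarrow> IIge r (a', a) (a', b)"
  unfolding IIge_def IIgt_def IIeq_def using Ieq_refl by auto

lemma shp_dsum_ge:
  assumes "cnt L' = cnt L" "\<And>q. dsum L q \<le> dsum L' q"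
  shows "Igt n (shp L') (shp L) \<or> Ieq n (shp L') (shp L)"
  using dgt_or_eqon[of "dsum L" "dsum L'" n] assms unfolding Igt_def Ieq_def shp_def by (auto simp: eqon_refl)

lemma core_part1:
  assumes P: "upc r P" "P (shp L1, shp L2)" and v: "valid1 L1" "valid2 L2" and x: "x \<in> Bplus"
  shows "W1 L1 (act x s (W2 L2)) \<in> NN P"
proof -
  from x consider (h) j where "x = hh j" "1 \<le> j" "j < r"
    | (xp) a b where "x = xp_ij a b" "1 \<le> a" "a \<le> b" "b + 1 < r"
    | (xb) a b where "x = xp_bar a b" "1 \<le> a" "a \<le> b" "b < r"
    unfolding Bplus_def by blast
  then show ?thesis
  proof cases
    case h
    have br': "\<And>k. 1 \<le> k \<Longrightarrow> k \<le> r \<Longrightarrow> \<exists>d. bracket r (hh j) (X2 r k) = msc d (X2 r k)"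
      using br_hh_ex h by auto
    show ?thesis unfolding h(1)
    proof (rule lin_span_sub[OF W1_lin[OF v(1)] gs_sub _ SH[OF sp_hh hh_cartan br' v(2)]])
      show "1 \<le> j" "j \<le> r" "1 \<le> j" "j \<le> r" using h by auto
      fix y assume "y \<in> {W2 L' | L'. valid2 L' \<and> im L' = im L2 \<and> (\<forall>q. dsum L2 q \<le> dsum L' q)}"
      then obtain L' where L': "y = W2 L'" "valid2 L'" "im L' = im L2" "\<forall>q. dsum L2 q \<le> dsum L' q" by blast
      have "IIge r (shp L1, shp L') (shp L1, shp L2)"
        using shp_dsum_ge[of L' L2 r] L' by (intro IIge_sndI) (auto simp: cnt_im)
      then have "P (shp L1, shp L')" using P unfolding upc_def by blast
      then show "W1 L1 y \<in> NN P" using L' gen_in_N v by simp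
    qed
  next
    case xp
    show ?thesis unfolding xp(1)
    proof (rule lin_span_sub[OF W1_lin[OF v(1)] gs_sub _ SX[OF xp(2,3,4) v(2)]])
      fix y assume "y \<in> {W2 L' | L'. valid2 L' \<and> add_mset a (im L') = add_mset (b + 1) (im L2)}"
      then obtain L' where L': "y = W2 L'" "valid2 L'" "add_mset a (im L') = add_mset (b + 1) (im L2)" by blast
      have "lgt r (cnt L') (cnt L2)"
        unfolding cnt_im by (rule lgt_multiset[of _ "{#a#}" _ "{#b + 1#}"]) (use L' xp in auto)
      then show "W1 L1 y \<in> NN P" using L' gen_in_N v P_big[OF P] by simp
    qed
  next
    case xb
    show ?thesis unfolding xb(1)
    proof (rule lin_span_sub[OF W1_lin[OF v(1)] gs_sub _ SXB[OF xb(2,3,4) v(2)]])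
      fix y assume "y \<in> {W2 L' | L'. valid2 L' \<and> lgt r (cnt L') (cnt L2)}"
      then obtain L' where L': "y = W2 L'" "valid2 L'" "lgt r (cnt L') (cnt L2)" by blast
      then have "P (shp L1, shp L')" using P_big[OF P] by blast
      then show "W1 L1 y \<in> NN P" using gen_in_N v L' by simp
    qed
  qed
qed


lemma IIge_fstI: "Igt (r - 1) a' b' \<or> Ieq (r - 1) a' b' \<Longrightarrow> IIge r (a', a) (b', a)"
  unfolding IIge_def IIgt_def IIeq_def using Ieq_refl by auto

lemma PP_in_N:
  assumes P: "upc r P" "P (q, shp L2)" and c: "1 \<le> c" "c < r" and v: "valid1 A1" "valid1 A2" "valid2 L2"
  shows "W1 A1 (act (PP r c) e (W1 A2 (W2 L2))) \<in> NN P"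
proof -
  define z where "z = act (PP r c) e (W1 A2 (W2 L2)) - W1 A2 (act (PP r c) e (W2 L2))"
  have z: "z \<in> V.span {W1 A' (act (RR r) e' (W2 L2)) | A' e'. valid1 A'}"
    unfolding z_def by (rule move_P[OF c v(2)])
  have "W1 A1 (act (PP r c) e (W1 A2 (W2 L2))) = W1 (A1 @ A2) (act (PP r c) e (W2 L2)) + W1 A1 z"
    unfolding z_def using lin_diff[OF W1_lin[OF v(1)]] by (simp add: wd_append algebra_simps)
  moreover have "W1 (A1 @ A2) (act (PP r c) e (W2 L2)) \<in> NN P"
    using TSN[OF P _ SP[OF c v(3)]] v by simp
  moreover have "W1 A1 z \<in> NN P"
  proof (rule lin_span_sub[OF W1_lin[OF v(1)] gs_sub _ z])
    fix y assume "y \<in> {W1 A' (act (RR r) e' (W2 L2)) | A' e'. valid1 A'}"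
    then obtain A' e' where "y = W1 A' (act (RR r) e' (W2 L2))" "valid1 A'" by blast
    then show "W1 A1 y \<in> NN P" using TSN[OF P _ SR[OF v(3)], of "A1 @ A'"] v by (simp add: wd_append)
  qed
  ultimately show ?thesis using gs_sub V.subspace_add by metis
qed

lemma core_part2:
  assumes P: "upc r P" "P (shp L1, shp L2)" and v: "valid1 L1" "valid2 L2" and x: "x \<in> Bplus"
    and L1: "L1 = A1 @ (k, a) # A2"
  shows "W1 A1 (act (bracket r x (X1 r k)) (s + a) (W1 A2 (W2 L2))) \<in> NN P"
proof -
  have vA: "valid1 A1" "valid1 A2" and k: "1 \<le> k" "k < r" using v(1) L1 by auto
  from x consider (h) j where "x = hh j" "1 \<le> j" "j < r"
    | (xp) a' b where "x = xp_ij a' b" "1 \<le> a'" "a' \<le> b" "b + 1 < r"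
    | (xb) a' b where "x = xp_bar a' b" "1 \<le> a'" "a' \<le> b" "b < r"
    unfolding Bplus_def by blast
  then show ?thesis
  proof cases
    case h
    show ?thesis
    proof (cases "j = k")
      case True
      define L1' where "L1' = A1 @ (k, s + a) # A2"
      have eq: "W1 A1 (act (bracket r x (X1 r k)) (s + a) (W1 A2 (W2 L2))) = smult (-1) (W1 L1' (W2 L2))"
        unfolding L1'_def using h True br_h_X1[OF h(2,3) k] act_msc[OF sp_X1[OF k]] lin_scale[OF W1_lin[OF vA(1)]] lin_neg[OF W1_lin[OF vA(1)]]
        by (simp add: wd_append)
      have "cnt L1' = cnt L1" unfolding L1'_def L1 cnt_append by (simp add: cnt_im)
      moreover have "dsum L1 q \<le> dsum L1' q" for q unfolding L1'_def L1 by (simp add: dsum_append)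
      ultimately have "IIge r (shp L1', shp L2) (shp L1, shp L2)"
        using shp_dsum_ge[of L1' L1 "r - 1"] by (intro IIge_fstI) auto
      then have "P (shp L1', shp L2)" using P unfolding upc_def by blast
      moreover have "valid1 L1'" unfolding L1'_def using vA k by simp
      ultimately have "W1 L1' (W2 L2) \<in> NN P" using gen_in_N v by simp
      then show ?thesis unfolding eq using gs_sub V.subspace_scale by blast
    next
      case False
      then show ?thesis using h br_h_X1[OF h(2,3) k] act_zero_mat lin_zero[OF W1_lin[OF vA(1)]] gs_sub V.subspace_0
        by simp
    qed
  next
    case xp
    show ?thesis
    proof (cases "k = a'")
      case True
      define L1' where "L1' = A1 @ (b + 1, s + a) # A2"
      have eq: "W1 A1 (act (bracket r x (X1 r k)) (s + a) (W1 A2 (W2 L2))) = smult (-1) (W1 L1' (W2 L2))"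
        unfolding L1'_def using xp True br_xpij_X1[OF xp(2,3,4) k] act_msc[OF sp_X1[of "b + 1" r]] lin_scale[OF W1_lin[OF vA(1)]] lin_neg[OF W1_lin[OF vA(1)]]
        by (simp add: wd_append)
      have "lgt (r - 1) (cnt L1') (cnt L1)"
        unfolding cnt_im L1'_def L1 by (rule lgt_multiset[of _ "{#a'#}" _ "{#b + 1#}"]) (use xp True in auto)
      then have "IIge r (shp L1', shp L2) (shp L1, shp L2)"
        by (intro IIge_fstI) (simp add: Igt_def shp_def)
      then have "P (shp L1', shp L2)" using P unfolding upc_def by blast
      moreover have "valid1 L1'" unfolding L1'_def using vA xp by simp
      ultimately have "W1 L1' (W2 L2) \<in> NN P" using gen_in_N v by simp
      then show ?thesis unfolding eq using gs_sub V.subspace_scale by blast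
    next
      case False
      then show ?thesis using xp br_xpij_X1[OF xp(2,3,4) k] act_zero_mat lin_zero[OF W1_lin[OF vA(1)]] gs_sub V.subspace_0
        by simp
    qed
  next
    case xb
    have PPc: "W1 A1 (act (msc (-1) (PP r c)) (s + a) (W1 A2 (W2 L2))) \<in> NN P" if c: "1 \<le> c" "c < r" for c
    proof -
      have "W1 A1 (act (msc (-1) (PP r c)) (s + a) (W1 A2 (W2 L2))) = smult (-1) (W1 A1 (act (PP r c) (s + a) (W1 A2 (W2 L2))))"
        using act_msc[OF sp_PP[OF c]] lin_scale[OF W1_lin[OF vA(1)]] lin_neg[OF W1_lin[OF vA(1)]] by simp
      then show ?thesis using PP_in_N[OF P c vA v(2)] gs_sub V.subspace_scale by metis
    qed
    show ?thesis
    proof (cases "k = a'")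
      case True
      then show ?thesis using xb br_xpbar_X1[OF xb(2,3,4) k] PPc[of b] by simp
    next
      case False
      show ?thesis
      proof (cases "k = b")
        case True
        then show ?thesis using xb False br_xpbar_X1[OF xb(2,3,4) k] PPc[of a'] by simp
      next
        case False2: False
        then show ?thesis using xb False br_xpbar_X1[OF xb(2,3,4) k] act_zero_mat lin_zero[OF W1_lin[OF vA(1)]] gs_sub V.subspace_0
          by simp
      qed
    qed
  qed
qed

lemma core:
  assumes P: "upc r P" "P (shp L1, shp L2)" and v: "valid1 L1" "valid2 L2" and x: "x \<in> Bplus"
  shows "act x s (W1 L1 (W2 L2)) \<in> NN P"
proof -
  have d: "act x s (W1 L1 (W2 L2)) - W1 L1 (act x s (W2 L2)) \<in> NN P"
  proof (rule span_sub[OF leib[OF Bplus_sp[OF x] v(1)] _ gs_sub])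
    fix y assume "y \<in> {W1 A1 (act (bracket r x (X1 r k)) (s + a) (W1 A2 (W2 L2))) | A1 k a A2. L1 = A1 @ (k, a) # A2}"
    then show "y \<in> NN P" using core_part2[OF P v x] by blast
  qed
  have "W1 L1 (act x s (W2 L2)) + (act x s (W1 L1 (W2 L2)) - W1 L1 (act x s (W2 L2))) \<in> NN P"
    using core_part1[OF P v x] d gs_sub V.subspace_add by blast
  then show ?thesis by simp
qed

end


section \<open>Matrix decomposition of g_red\<close>

definition Rm :: "int \<Rightarrow> int \<Rightarrow> mat" where
  "Rm i j = E i j - msc (of_int (sgn i * sgn j)) (E (- j) (- i))"

lemma sum_mat_apply: "finite S \<Longrightarrow> (\<Sum>i\<in>S. f i) p q = (\<Sum>i\<in>S. (f i :: mat) p q)"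
  by (induction rule: finite_induct) auto

lemma Idx_red: "x \<in> Idx (r - 1) \<longleftrightarrow> x \<in> Idx r \<and> x \<noteq> int r \<and> x \<noteq> - int r"
  by (auto simp: Idx_mem of_nat_diff)

lemma Idx_sub: "x \<in> Idx (r - 1) \<Longrightarrow> x \<in> Idx r"
  by (auto simp: Idx_mem)

lemma Idx_neg: "- x \<in> Idx r \<longleftrightarrow> x \<in> Idx r"
  by (auto simp: Idx_mem)

lemma gred_entry0: "A \<in> g_red r \<Longrightarrow> p \<notin> Idx (r - 1) \<or> q \<notin> Idx (r - 1) \<Longrightarrow> A p q = 0"
proof -
  assume A: "A \<in> g_red r" and pq: "p \<notin> Idx (r - 1) \<or> q \<notin> Idx (r - 1)"
  have sp: "\<forall>i j. (i \<notin> Idx r \<or> j \<notin> Idx r) \<longrightarrow> A i j = 0"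
    and red: "\<forall>i j. (i \<in> {int r, - int r} \<or> j \<in> {int r, - int r}) \<longrightarrow> A i j = 0"
    using A unfolding g_red_def sp_def by blast+
  have "p \<notin> Idx r \<or> q \<notin> Idx r \<or> p \<in> {int r, - int r} \<or> q \<in> {int r, - int r}"
    using pq unfolding Idx_red by blast
  then show "A p q = 0" using sp red by blast
qed

lemma gred_expand:
  assumes A: "A \<in> g_red r"
  shows "A = msc (1/2) (\<Sum>ij\<in>Idx (r - 1) \<times> Idx (r - 1). msc (A (fst ij) (snd ij)) (Rm (fst ij) (snd ij)))"
proof (rule ext, rule ext)
  fix p q
  let ?S = "Idx (r - 1) \<times> Idx (r - 1)"
  have fin: "finite ?S" by simp
  have "(\<Sum>ij\<in>?S. msc (A (fst ij) (snd ij)) (Rm (fst ij) (snd ij))) p q =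
        (\<Sum>ij\<in>?S. (if ij = (p, q) then A p q else 0)) -
        (\<Sum>ij\<in>?S. (if ij = (- q, - p) then A (- q) (- p) * of_int (sgn (- q) * sgn (- p)) else 0))"
    unfolding sum_mat_apply[OF fin] sum_subtractf[symmetric]
  proof (rule sum.cong[OF refl])
    fix ij :: "int \<times> int"
    obtain i j where ij: "ij = (i, j)" by force
    have "msc (A i j) (Rm i j) p q = A i j * (if p = i \<and> q = j then 1 else 0) -
       A i j * (of_int (sgn i * sgn j) * (if p = - j \<and> q = - i then 1 else 0))"
      unfolding Rm_def msc_def E_def by (simp add: algebra_simps)
    also have "\<dots> = (if ij = (p, q) then A p q else 0) -
        (if ij = (- q, - p) then A (- q) (- p) * of_int (sgn (- q) * sgn (- p)) else 0)"
    proof -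
      have c1: "(p = i \<and> q = j) \<longleftrightarrow> ij = (p, q)" unfolding ij by auto
      have c2: "(p = - j \<and> q = - i) \<longleftrightarrow> ij = (- q, - p)" unfolding ij by auto
      have t1: "A i j * (if p = i \<and> q = j then 1 else 0) = (if ij = (p, q) then A p q else 0)"
        unfolding c1 using ij by simp
      have t2: "A i j * (of_int (sgn i * sgn j) * (if p = - j \<and> q = - i then 1 else 0)) =
          (if ij = (- q, - p) then A (- q) (- p) * of_int (sgn (- q) * sgn (- p)) else 0)"
      proof (cases "ij = (- q, - p)")
        case True
        then have "i = - q" "j = - p" using ij by auto
        then show ?thesis using True by (simp only: c2 if_True) simp
      next
        case False
        then show ?thesis by (simp only: c2 if_False) simp
      qed
      show ?thesis unfolding t1 t2 ..
    qed
    finally show "msc (A (fst ij) (snd ij)) (Rm (fst ij) (snd ij)) p q = (if ij = (p, q) then A p q else 0) -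
        (if ij = (- q, - p) then A (- q) (- p) * of_int (sgn (- q) * sgn (- p)) else 0)"
      unfolding ij by simp
  qed
  also have "\<dots> = (if (p, q) \<in> ?S then A p q - A (- q) (- p) * of_int (sgn q * sgn p) else 0)"
  proof -
    have s1: "(\<Sum>ij\<in>?S. (if ij = (p, q) then A p q else 0)) = (if (p, q) \<in> ?S then A p q else 0)"
      by (rule sum.delta[OF fin])
    have s2: "(\<Sum>ij\<in>?S. (if ij = (- q, - p) then A (- q) (- p) * of_int (sgn (- q) * sgn (- p)) else 0))
        = (if (- q, - p) \<in> ?S then A (- q) (- p) * of_int (sgn (- q) * sgn (- p)) else 0)"
      by (rule sum.delta[OF fin])
    have s3: "(- q, - p) \<in> ?S \<longleftrightarrow> (p, q) \<in> ?S" using Idx_neg by auto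
    have s4: "sgn (- q) * sgn (- p) = sgn q * sgn p" by (simp add: sgn_minus)
    show ?thesis
    proof (cases "(p, q) \<in> ?S")
      case True
      then have T2: "(- q, - p) \<in> ?S" using s3 by blast
      show ?thesis unfolding s1 s2 by (simp only: if_P[OF True] if_P[OF T2] s4)
    next
      case False
      then have F2: "(- q, - p) \<notin> ?S" using s3 by blast
      show ?thesis unfolding s1 s2 by (simp only: if_not_P[OF False] if_not_P[OF F2] diff_zero)
    qed
  qed
  also have "\<dots> = 2 * A p q"
  proof (cases "(p, q) \<in> ?S")
    case True
    from True have "p \<in> Idx (r - 1)" "q \<in> Idx (r - 1)" by blast+
    then have "p \<in> Idx r" "q \<in> Idx r" using Idx_sub by blast+
    then have "A p q = - of_int (sgn p * sgn q) * A (- q) (- p)" using A unfolding g_red_def sp_def by blast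
    then show ?thesis using True by (simp add: algebra_simps)
  next
    case False
    then show ?thesis using gred_entry0[OF A] by auto
  qed
  finally show "A p q = msc (1/2) (\<Sum>ij\<in>?S. msc (A (fst ij) (snd ij)) (Rm (fst ij) (snd ij))) p q"
    by (simp add: msc_def)
qed

lemma Idx_cases: "x \<in> Idx n \<Longrightarrow> \<exists>a. 1 \<le> a \<and> a \<le> n \<and> (x = int a \<or> x = - int a)"
proof -
  assume "x \<in> Idx n"
  then consider "1 \<le> x" "x \<le> int n" | "- int n \<le> x" "x \<le> -1" unfolding Idx_mem by blast
  then show ?thesis
  proof cases
    case 1 then show ?thesis by (intro exI[of _ "nat x"]) auto
  next
    case 2 then show ?thesis by (intro exI[of _ "nat (- x)"]) auto
  qed
qed

lemma sgn_pos_int: "1 \<le> a \<Longrightarrow> sgn (int a) = 1" by simp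
lemma sgn_neg_int: "1 \<le> a \<Longrightarrow> sgn (- int a) = -1" by simp

lemma Rm_pp_lt: "1 \<le> a \<Longrightarrow> a < b \<Longrightarrow> Rm (int a) (int b) = xp_ij a (b - 1)"
  by (auto simp: Rm_def xp_ij_def msc_def E_def fun_eq_iff of_nat_diff)
lemma Rm_pp_eq: "1 \<le> a \<Longrightarrow> Rm (int a) (int a) = hh a"
  by (auto simp: Rm_def hh_def msc_def E_def fun_eq_iff)
lemma Rm_pp_gt: "1 \<le> b \<Longrightarrow> b < a \<Longrightarrow> Rm (int a) (int b) = xm_ij b (a - 1)"
  by (auto simp: Rm_def xm_ij_def msc_def E_def fun_eq_iff of_nat_diff)
lemma Rm_pn_ne: "1 \<le> a \<Longrightarrow> 1 \<le> b \<Longrightarrow> a \<noteq> b \<Longrightarrow> Rm (int a) (- int b) = xp_bar (min a b) (max a b)"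
  by (auto simp: Rm_def xp_bar_def msc_def E_def fun_eq_iff min_def max_def)
lemma Rm_pn_eq: "1 \<le> a \<Longrightarrow> Rm (int a) (- int a) = msc 2 (xp_bar a a)"
  by (auto simp: Rm_def xp_bar_def msc_def E_def fun_eq_iff)
lemma Rm_np_ne: "1 \<le> a \<Longrightarrow> 1 \<le> b \<Longrightarrow> a \<noteq> b \<Longrightarrow> Rm (- int a) (int b) = xm_bar (min a b) (max a b)"
  by (auto simp: Rm_def xm_bar_def msc_def E_def fun_eq_iff min_def max_def)
lemma Rm_np_eq: "1 \<le> a \<Longrightarrow> Rm (- int a) (int a) = msc 2 (xm_bar a a)"
  by (auto simp: Rm_def xm_bar_def msc_def E_def fun_eq_iff)
lemma Rm_nn: "1 \<le> a \<Longrightarrow> 1 \<le> b \<Longrightarrow> Rm (- int a) (- int b) = msc (-1) (Rm (int b) (int a))"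
  by (auto simp: Rm_def msc_def E_def fun_eq_iff)

lemma gred_sub:
  assumes Z0: "0 \<in> Z" and Zadd: "\<And>x y. x \<in> Z \<Longrightarrow> y \<in> Z \<Longrightarrow> x + y \<in> Z"
    and Zmsc: "\<And>c x. x \<in> Z \<Longrightarrow> msc c x \<in> Z"
    and Zh: "\<And>j. 1 \<le> j \<Longrightarrow> j < r \<Longrightarrow> hh j \<in> Z"
    and Zxp: "\<And>a b. 1 \<le> a \<Longrightarrow> a \<le> b \<Longrightarrow> b + 1 < r \<Longrightarrow> xp_ij a b \<in> Z"
    and Zxb: "\<And>a b. 1 \<le> a \<Longrightarrow> a \<le> b \<Longrightarrow> b < r \<Longrightarrow> xp_bar a b \<in> Z"
    and Zxm: "\<And>a b. 1 \<le> a \<Longrightarrow> a \<le> b \<Longrightarrow> b + 1 < r \<Longrightarrow> xm_ij a b \<in> Z"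
    and Zxmb: "\<And>a b. 1 \<le> a \<Longrightarrow> a \<le> b \<Longrightarrow> b < r \<Longrightarrow> xm_bar a b \<in> Z"
  shows "g_red r \<subseteq> Z"
proof
  fix A assume A: "A \<in> g_red r"
  have pp: "Rm (int a) (int b) \<in> Z" if "1 \<le> a" "a < r" "1 \<le> b" "b < r" for a b
  proof -
    consider "a < b" | "a = b" | "b < a" by linarith
    then show ?thesis
    proof cases
      case 1 then show ?thesis using that Rm_pp_lt Zxp[of a "b - 1"] by simp
    next
      case 2 then show ?thesis using that Rm_pp_eq Zh by simp
    next
      case 3 then show ?thesis using that Rm_pp_gt Zxm[of b "a - 1"] by simp
    qed
  qed
  have R: "Rm i j \<in> Z" if ij: "i \<in> Idx (r - 1)" "j \<in> Idx (r - 1)" for i j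
  proof -
    obtain a where a0: "1 \<le> a" "a \<le> r - 1" "i = int a \<or> i = - int a"
      using Idx_cases[OF ij(1)] by blast
    then have a: "1 \<le> a" "a < r" "i = int a \<or> i = - int a" by auto
    obtain b where b0: "1 \<le> b" "b \<le> r - 1" "j = int b \<or> j = - int b"
      using Idx_cases[OF ij(2)] by blast
    then have b: "1 \<le> b" "b < r" "j = int b \<or> j = - int b" by auto
    show ?thesis
    proof (cases "i = int a")
      case ia: True
      show ?thesis
      proof (cases "j = int b")
        case True then show ?thesis using ia pp a b by simp
      next
        case False
        then have jb: "j = - int b" using b by auto
        show ?thesis
        proof (cases "a = b")
          case True then show ?thesis using ia jb a Rm_pn_eq Zmsc Zxb[of a a] by simp
        next
          case False then show ?thesis using ia jb a b Rm_pn_ne Zxb[of "min a b" "max a b"] by (simp add: min_def max_def)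
        qed
      qed
    next
      case False
      then have ia: "i = - int a" using a by auto
      show ?thesis
      proof (cases "j = int b")
        case jb: True
        show ?thesis
        proof (cases "a = b")
          case True then show ?thesis using ia jb a Rm_np_eq Zmsc Zxmb[of a a] by simp
        next
          case False then show ?thesis using ia jb a b Rm_np_ne Zxmb[of "min a b" "max a b"] by (simp add: min_def max_def)
        qed
      next
        case False
        then have jb: "j = - int b" using b by auto
        then show ?thesis using ia a b Rm_nn pp[of b a] Zmsc by simp
      qed
    qed
  qed
  have sumZ: "finite S \<Longrightarrow> (\<forall>x\<in>S. f x \<in> Z) \<Longrightarrow> sum f S \<in> Z" for S and f :: "int \<times> int \<Rightarrow> mat"
    by (induction rule: finite_induct) (auto intro: Z0 Zadd)
  have "(\<Sum>ij\<in>Idx (r - 1) \<times> Idx (r - 1). msc (A (fst ij) (snd ij)) (Rm (fst ij) (snd ij))) \<in> Z"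
    by (rule sumZ) (auto intro!: Zmsc R)
  then have "msc (1/2) (\<Sum>ij\<in>Idx (r - 1) \<times> Idx (r - 1). msc (A (fst ij) (snd ij)) (Rm (fst ij) (snd ij))) \<in> Z"
    by (rule Zmsc)
  then show "A \<in> Z" using gred_expand[OF A] by simp
qed


lemma sum_Idx_neg: "(\<Sum>k\<in>Idx r. f (- k)) = (\<Sum>k\<in>Idx r. f k)"
proof (rule sum.reindex_bij_witness[of _ uminus uminus])
qed (auto simp: Idx_neg)

lemma Idx_nz: "k \<in> Idx r \<Longrightarrow> k \<noteq> 0" by (auto simp: Idx_mem)

lemma mm_sym:
  assumes A: "A \<in> sp r" and B: "B \<in> sp r" and pq: "p \<in> Idx r" "q \<in> Idx r"
  shows "mmul r A B p q = of_int (sgn p * sgn q) * mmul r B A (- q) (- p)"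
proof -
  have a: "A i j = - of_int (sgn i * sgn j) * A (- j) (- i)" if "i \<in> Idx r" "j \<in> Idx r" for i j
    using A that unfolding sp_def by blast
  have b: "B i j = - of_int (sgn i * sgn j) * B (- j) (- i)" if "i \<in> Idx r" "j \<in> Idx r" for i j
    using B that unfolding sp_def by blast
  have sq: "of_int (sgn k) * of_int (sgn k) = (1::complex)" if "k \<in> Idx r" for k
    using Idx_nz[OF that] by (cases "k > 0") (auto simp: sgn_if)
  have "mmul r A B p q = (\<Sum>k\<in>Idx r. A p k * B k q)" by (simp add: mmul_def)
  also have "\<dots> = (\<Sum>k\<in>Idx r. of_int (sgn p * sgn q) * (B (- q) (- k) * A (- k) (- p)))"
  proof (rule sum.cong[OF refl])
    fix k assume k: "k \<in> Idx r"
    have "A p k * B k q = (of_int (sgn k) * of_int (sgn k)) * (of_int (sgn p * sgn q) * (B (- q) (- k) * A (- k) (- p)))"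
      using a[OF pq(1) k] b[OF k pq(2)] by (simp add: algebra_simps)
    then show "A p k * B k q = of_int (sgn p * sgn q) * (B (- q) (- k) * A (- k) (- p))"
      using sq[OF k] by simp
  qed
  also have "\<dots> = of_int (sgn p * sgn q) * (\<Sum>k\<in>Idx r. B (- q) (- k) * A (- k) (- p))"
    by (simp add: sum_distrib_left)
  also have "(\<Sum>k\<in>Idx r. B (- q) (- k) * A (- k) (- p)) = (\<Sum>k\<in>Idx r. B (- q) k * A k (- p))"
    by (rule sum_Idx_neg[of "\<lambda>k. B (- q) k * A k (- p)" r])
  finally show ?thesis by (simp add: mmul_def)
qed

lemma sp_bracket:
  assumes A: "A \<in> sp r" and B: "B \<in> sp r"
  shows "bracket r A B \<in> sp r"
  unfolding sp_def
proof (intro CollectI conjI allI impI ballI)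
  fix i j :: int assume "i \<notin> Idx r \<or> j \<notin> Idx r"
  moreover have "A i k = 0" "B i k = 0" if "i \<notin> Idx r" for i k using A B that unfolding sp_def by blast+
  moreover have "A k j = 0" "B k j = 0" if "j \<notin> Idx r" for j k using A B that unfolding sp_def by blast+
  ultimately show "bracket r A B i j = 0" unfolding bracket_def mmul_def by auto
next
  fix i j assume ij: "i \<in> Idx r" "j \<in> Idx r"
  have m1: "mmul r A B i j = of_int (sgn i * sgn j) * mmul r B A (- j) (- i)" by (rule mm_sym[OF A B ij])
  have m2: "mmul r B A i j = of_int (sgn i * sgn j) * mmul r A B (- j) (- i)" by (rule mm_sym[OF B A ij])
  show "bracket r A B i j = - of_int (sgn i * sgn j) * bracket r A B (- j) (- i)"
    unfolding bracket_def using m1 m2 by (simp add: algebra_simps)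
qed

lemma gred_bracket:
  assumes A: "A \<in> g_red r" and B: "B \<in> g_red r"
  shows "bracket r A B \<in> g_red r"
proof -
  have "bracket r A B \<in> sp r" using A B unfolding g_red_def by (auto intro: sp_bracket)
  moreover have "bracket r A B i j = 0" if "i \<in> {int r, - int r} \<or> j \<in> {int r, - int r}" for i j
  proof -
    have "A i k = 0 \<and> B i k = 0 \<or> A k j = 0 \<and> B k j = 0" for k
      using A B that unfolding g_red_def by blast
    then have "A i k * B k j = 0 \<and> B i k * A k j = 0" for k by auto
    then have "mmul r A B i j = 0" "mmul r B A i j = 0" unfolding mmul_def by (simp_all add: sum.neutral)
    then show ?thesis unfolding bracket_def by simp
  qed
  ultimately show ?thesis unfolding g_red_def by blast
qed

lemma gred_add: "A \<in> g_red r \<Longrightarrow> B \<in> g_red r \<Longrightarrow> A + B \<in> g_red r"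
  unfolding g_red_def using sp_add by auto
lemma gred_msc: "A \<in> g_red r \<Longrightarrow> msc c A \<in> g_red r"
  unfolding g_red_def using sp_msc by (auto simp: msc_def)
lemma gred_zero: "0 \<in> g_red r"
  unfolding g_red_def using sp_zero by auto

lemma nminus_gred: "nminus_red r \<subseteq> g_red r"
  unfolding nminus_red_def mspan_def
proof (rule module.span_minimal[OF module_msc])
  show "module.subspace msc (g_red r)"
    using gred_add gred_msc gred_zero by (auto simp: module.subspace_def[OF module_msc])
  show "{xm_ij i j |i j. 1 \<le> i \<and> i \<le> j \<and> j < r - 1} \<union> {xm_bar i j |i j. 1 \<le> i \<and> i \<le> j \<and> j \<le> r - 1} \<subseteq> g_red r"
  proof
    fix x assume "x \<in> {xm_ij i j |i j. 1 \<le> i \<and> i \<le> j \<and> j < r - 1} \<union> {xm_bar i j |i j. 1 \<le> i \<and> i \<le> j \<and> j \<le> r - 1}"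
    then consider (a) i j where "x = xm_ij i j" "1 \<le> i" "i \<le> j" "j < r - 1"
      | (b) i j where "x = xm_bar i j" "1 \<le> i" "i \<le> j" "j \<le> r - 1" by blast
    then show "x \<in> g_red r"
    proof cases
      case a
      then have "x \<in> sp r" using sp_xm_ij[of i j r] by simp
      then show ?thesis using a unfolding g_red_def by (auto simp: xm_ij_def E_def)
    next
      case b
      then have "x \<in> sp r" using sp_xm_bar[of i j r] by simp
      then show ?thesis using b unfolding g_red_def by (auto simp: xm_bar_def E_def)
    qed
  qed
qed


context WS
begin

definition flat :: "(nat \<Rightarrow> nat list) \<Rightarrow> nat list \<Rightarrow> (nat \<times> nat) list" where
  "flat S ks = concat (map (\<lambda>k. map (Pair k) (S k)) ks)"

lemma cnt_Nil[simp]: "cnt [] k = 0" by (simp add: cnt_im)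
lemma cnt_map_Pair: "cnt (map (Pair k') xs) k = (if k = k' then length xs else 0)"
  by (induction xs) (auto simp: cnt_im)
lemma dsum_map_Pair: "dsum (map (Pair k') xs) k = (if k = k' then sum_list xs else 0)"
  by (induction xs) auto

lemma cnt_flat: "distinct ks \<Longrightarrow> cnt (flat S ks) k = (if k \<in> set ks then length (S k) else 0)"
  by (induction ks) (auto simp: flat_def cnt_append cnt_map_Pair)
lemma dsum_flat: "distinct ks \<Longrightarrow> dsum (flat S ks) k = (if k \<in> set ks then sum_list (S k) else 0)"
  by (induction ks) (auto simp: flat_def dsum_append dsum_map_Pair)

lemma gens_form:
  assumes g: "g \<in> gens r act w P" and P: "upc r P"
  shows "\<exists>L1 L2. valid1 L1 \<and> valid2 L2 \<and> P (shp L1, shp L2) \<and> g = W1 L1 (W2 L2)"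
proof -
  obtain S' S where g: "g = xmono r act (r - 1) S' (xmono r act r S w)" and PS: "P (shape S', shape S)"
    using g unfolding gens_def by blast
  define L1 where "L1 = flat S' [1..<r]"
  define L2 where "L2 = flat S [1..<r+1]"
  have e2: "(\<lambda>k. xminus r k r) = X2 r" by (simp add: fun_eq_iff xminus_X2)
  have e1: "(\<lambda>k. xminus r k (r - 1)) = X1 r" by (rule ext) (rule xminus_X1[OF r1])
  have rr: "r - 1 + 1 = r" using r1 by simp
  have "xmono r act r S w = W2 L2" unfolding xmono_wd e2 L2_def flat_def ..
  moreover have "xmono r act (r - 1) S' v = W1 L1 v" for v unfolding xmono_wd e1 rr L1_def flat_def ..
  ultimately have geq: "g = W1 L1 (W2 L2)" using g by simp
  have v1: "valid1 L1" unfolding L1_def flat_def valid1_def by auto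
  have v2: "valid2 L2" unfolding L2_def flat_def valid2_def by auto
  have "Ieq r (shp L2) (shape S)"
    unfolding Ieq_def eqon_def shp_def shape_def L2_def by (auto simp: cnt_flat dsum_flat)
  moreover have "Ieq (r - 1) (shp L1) (shape S')"
    unfolding Ieq_def eqon_def shp_def shape_def L1_def by (auto simp: cnt_flat dsum_flat)
  ultimately have "IIge r (shp L1, shp L2) (shape S', shape S)"
    unfolding IIge_def IIeq_def by simp
  then have "P (shp L1, shp L2)" using P PS unfolding upc_def by blast
  then show ?thesis using v1 v2 geq by blast
qed

lemma Bplus_gred: "x \<in> Bplus \<Longrightarrow> x \<in> g_red r"
proof -
  assume x: "x \<in> Bplus"
  have "x i j = 0" if "i \<in> {int r, - int r} \<or> j \<in> {int r, - int r}" for i j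
    using x that unfolding Bplus_def by (auto simp: hh_def xp_ij_def xp_bar_def E_def)
  then show ?thesis using Bplus_sp[OF x] unfolding g_red_def by blast
qed

lemma Zlemma:
  assumes u: "u \<in> NN P" and uB: "\<And>x s. x \<in> Bplus \<Longrightarrow> act x s u \<in> NN P"
  shows "\<And>z t. z \<in> g_red r \<Longrightarrow> act z t u \<in> NN P"
proof -
  let ?Z = "{z \<in> sp r. \<forall>t. act z t u \<in> NN P}"
  have "g_red r \<subseteq> ?Z"
  proof (rule gred_sub)
    show "0 \<in> ?Z" using sp_zero act_zero_mat V.subspace_0[OF gs_sub] by auto
    show "x + y \<in> ?Z" if "x \<in> ?Z" "y \<in> ?Z" for x y
      using that sp_add act_add_x V.subspace_add[OF gs_sub] by auto
    show "msc c x \<in> ?Z" if "x \<in> ?Z" for c x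
      using that sp_msc act_msc V.subspace_scale[OF gs_sub] by auto
    show "hh j \<in> ?Z" if "1 \<le> j" "j < r" for j
    proof -
      have m: "hh j \<in> Bplus" using that unfolding Bplus_def by blast
      show ?thesis using uB[OF m] Bplus_sp[OF m] by blast
    qed
    show "xp_ij a b \<in> ?Z" if "1 \<le> a" "a \<le> b" "b + 1 < r" for a b
    proof -
      have m: "xp_ij a b \<in> Bplus" using that unfolding Bplus_def by blast
      show ?thesis using uB[OF m] Bplus_sp[OF m] by blast
    qed
    show "xp_bar a b \<in> ?Z" if "1 \<le> a" "a \<le> b" "b < r" for a b
    proof -
      have m: "xp_bar a b \<in> Bplus" using that unfolding Bplus_def by blast
      show ?thesis using uB[OF m] Bplus_sp[OF m] by blast
    qed
    show "xm_ij a b \<in> ?Z" if "1 \<le> a" "a \<le> b" "b + 1 < r" for a b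
      using that u gs_closed[OF xm_ij_nminus[of a b r]] by (auto intro!: sp_xm_ij)
    show "xm_bar a b \<in> ?Z" if "1 \<le> a" "a \<le> b" "b < r" for a b
      using that u gs_closed[OF xm_bar_nminus[of a b r]] by (auto intro!: sp_xm_bar)
  qed
  then show "\<And>z t. z \<in> g_red r \<Longrightarrow> act z t u \<in> NN P" by blast
qed

lemma gred_sp: "z \<in> g_red r \<Longrightarrow> z \<in> sp r" unfolding g_red_def by blast

lemma N_Bplus:
  assumes P: "upc r P" and u: "u \<in> NN P" and x: "x \<in> Bplus"
  shows "act x s u \<in> NN P"
proof -
  let ?N' = "{u \<in> NN P. \<forall>x\<in>Bplus. \<forall>s. act x s u \<in> NN P}"
  have "NN P \<subseteq> ?N'"
  proof (rule gs_min)
    show "gens r act w P \<subseteq> ?N'"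
    proof
      fix g assume g: "g \<in> gens r act w P"
      then obtain L1 L2 where L: "valid1 L1" "valid2 L2" "P (shp L1, shp L2)" "g = W1 L1 (W2 L2)"
        using gens_form[OF g P] by blast
      show "g \<in> ?N'" using g gs_base core[OF P L(3) L(1,2)] L(4) by blast
    qed
    show "V.subspace ?N'"
      unfolding V.subspace_def
      using V.subspace_0[OF gs_sub] V.subspace_add[OF gs_sub] V.subspace_scale[OF gs_sub]
        lin_zero[OF act_lin[OF Bplus_sp]] lin_add[OF act_lin[OF Bplus_sp]] lin_scale[OF act_lin[OF Bplus_sp]]
      by auto
    fix y e v assume y: "y \<in> nminus_red r" and v: "v \<in> ?N'"
    have ysp: "y \<in> sp r" using y nminus_gred gred_sp by blast
    have "act y e v \<in> NN P" using y v gs_closed by blast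
    moreover have "act x s (act y e v) \<in> NN P" if x: "x \<in> Bplus" for x s
    proof -
      have "act x s (act y e v) = act y e (act x s v) + act (bracket r x y) (s + e) v"
        by (rule act_comm[OF Bplus_sp[OF x] ysp])
      moreover have "act y e (act x s v) \<in> NN P" using y v x gs_closed by blast
      moreover have "bracket r x y \<in> g_red r"
        using gred_bracket Bplus_gred[OF x] y nminus_gred by blast
      then have "act (bracket r x y) (s + e) v \<in> NN P" using Zlemma v by blast
      ultimately show ?thesis using V.subspace_add[OF gs_sub] by simp
    qed
    ultimately show "act y e v \<in> ?N'" by blast
  qed
  then show ?thesis using u x by blast
qed

lemma main_eq:
  assumes P: "upc r P"
  shows "W_filt r smult act w P = U_filt_w r smult act w P"
proof
  show "W_filt r smult act w P \<subseteq> U_filt_w r smult act w P"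
    unfolding W_filt_def U_filt_w_def
  proof (rule gs_min[OF gs_base gs_sub])
    fix z s u assume z: "z \<in> g_red r" and u: "u \<in> NN P"
    show "act z s u \<in> NN P" using Zlemma[OF u N_Bplus[OF P u] z] .
  qed
  show "U_filt_w r smult act w P \<subseteq> W_filt r smult act w P"
    unfolding W_filt_def U_filt_w_def
  proof (rule gs_min[OF gs_base gs_sub])
    fix z s u assume "z \<in> nminus_red r" "u \<in> gen_sub smult act (g_red r) (gens r act w P)"
    then show "act z s u \<in> gen_sub smult act (g_red r) (gens r act w P)"
      using nminus_gred gs_closed by blast
  qed
qed

end

theorem proposition4p3:
  fixes r :: nat and m :: "nat \<Rightarrow> nat"
    and smult :: "complex \<Rightarrow> 'v::ab_group_add \<Rightarrow> 'v"
    and act :: "mat \<Rightarrow> nat \<Rightarrow> 'v \<Rightarrow> 'v" and w :: 'v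
    and i' i :: idx
  assumes "1 \<le> r"
    and "is_rep r smult act"
    and "weyl_vec r m smult act w"
  shows "W_filt r smult act w (\<lambda>p. IIge r p (i', i)) = U_filt_w r smult act w (\<lambda>p. IIge r p (i', i)) \<and>
         W_filt r smult act w (\<lambda>p. IIgt r p (i', i)) = U_filt_w r smult act w (\<lambda>p. IIgt r p (i', i))"
proof -
  interpret WS r m smult act w using assms by unfold_locales
  show ?thesis using main_eq[OF upc_ge] main_eq[OF upc_gt] by blast
qed


end
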